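(* Let $\mathcal{B}$ be a bicategory and let $\mathcal{N}\mathcal{B}\colon(\Theta^2)^{\mathrm{op}}\to\mathbf{Set}$ be its nerve. Then $\mathcal{N}\mathcal{B}$ satisfies the Segal condition, so it is a Tamsamani–Simpson weak $2$-category: (i) for every $k\ge0$ the Segal map $S_k\colon\mathcal{N}\mathcal{B}(k,-)\to\mathcal{N}\mathcal{B}(1,-)\times_{\mathcal{N}\mathcal{B}(0,0)}\cdots\times_{\mathcal{N}\mathcal{B}(0,0)}\mathcal{N}\mathcal{B}(1,-)$ ($k$ factors) is contractible; and (ii) for all $j,k\ge0$ the Segal map $S_{j,k}\colon\mathcal{N}\mathcal{B}(j,k)\to\mathcal{N}\mathcal{B}(j,1)\times_{\mathcal{N}\mathcal{B}(j,0)}\cdots\times_{\mathcal{N}\mathcal{B}(j,0)}\mathcal{N}\mathcal{B}(j,1)$ ($k$ factors) is a bijection.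
   Context: $\Delta$ is the category of finite ordinals $[k]=\{0,\dots,k\}$ and order-preserving maps. $\Theta^2$ is the quotient of $\Delta\times\Delta$ obtained by identifying all objects $([0],[k])$, $k\ge0$, into one object (represented by $(0,0)$) and identifying morphisms $(\phi,\psi)$ and $(\phi,\psi')$ whenever $\phi$ factors through $[0]$; write objects as $(j,k)$. Let $\sigma,\tau\colon[0]\to[1]$ pick $0$ and $1$, and $\iota_i\colon[1]\to[k]$ ($1\le i\le k$) send $0\mapsto i-1$, $1\mapsto i$. Nerve of a bicategory $\mathcal{B}$ (composition $\circ$ of $1$-cells, horizontal $*$ and vertical $\cdot$ composition of $2$-cells, associator $s$, left/right unitors $l,r$): $\mathcal{N}\mathcal{B}(j,k)$ is the set of quadruples $\big((a_u)_{0\le u\le j},(f^z_{uv})_{0\le u<v\le j,\,0\le z\le k},(\alpha^z_{uv})_{0\le u<v\le j,\,1\le z\le k},(\iota^z_{uvw})_{0\le u<v<w\le j,\,0\le z\le k}\big)$ with $a_u$ objects, $f^z_{uv}\colon a_u\to a_v$ $1$-cells, $\alpha^z_{uv}\colon f^{z-1}_{uv}\Rightarrow f^z_{uv}$ $2$-cells, $\iota^z_{uvw}\colon f^z_{vw}\circ f^z_{uv}\Rightarrow f^z_{uw}$ invertible $2$-cells, satisfying (A1) $\iota^z_{uvw}\cdot(\alpha^z_{vw}*\alpha^z_{uv})=\alpha^z_{uw}\cdot\iota^{z-1}_{uvw}$ and (A2) $\iota^z_{uwx}\cdot(1*\iota^z_{uvw})\cdot s=\iota^z_{uvx}\cdot(\iota^z_{vwx}*1)$,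 with $s\colon(f^z_{wx}\circ f^z_{vw})\circ f^z_{uv}\Rightarrow f^z_{wx}\circ(f^z_{vw}\circ f^z_{uv})$ the associator. (For $j=0$ this is just an object $a_0$, consistent with the identification in $\Theta^2$.) For $(p,q)\colon(l,m)\to(j,k)$, $\mathcal{N}\mathcal{B}(p,q)$ sends such a quadruple to $\big((b_u),(g^z_{uv}),(\beta^z_{uv}),(\kappa^z_{uvw})\big)$ with $b_u=a_{p(u)}$; $g^z_{uv}=f^{q(z)}_{p(u)p(v)}$ if $p(u)\ne p(v)$ and $1_{a_{p(u)}}$ otherwise; $\beta^z_{uv}$ the vertical composite $\alpha^{q(z)}_{p(u)p(v)}\cdot\ldots\cdot\alpha^{q(z-1)+1}_{p(u)p(v)}$ if $p(u)\ne p(v)$ (an identity if $q(z-1)=q(z)$), and $1_{1_{a_{p(u)}}}$ if $p(u)=p(v)$; $\kappa^z_{uvw}$ equal to $\iota^{q(z)}_{p(u)p(v)p(w)}$ if $p(u),p(v),p(w)$ are distinct, to the unitor $1\circ g^z_{uv}\Rightarrow g^z_{uv}$ if $p(u)\ne p(v)=p(w)$, to the unitor $g^z_{vw}\circ1\Rightarrow g^z_{vw}$ if $p(u)=p(v)\ne p(w)$, and to $1_{1_{a_{p(u)}}}$ (modulo the unitor $1\circ1\cong1$) if all equal. Segal maps: for a presheaf $A$ on $\Theta^2$, $A(k,-)$ is a simplicial set (functor $\Delta^{\mathrm{op}}\to\mathbf{Set}$) and $A(0,-)$ is constant at $A(0,0)$. $S_k$ is the map of simplicial sets into the wide pullback of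 $k$ copies of $A(1,-)$ along $t=A(\tau,\mathrm{id})$ and $s=A(\sigma,\mathrm{id})$, with components $A(\iota_i,\mathrm{id})$. $S_{j,k}$ is the map into the wide pullback of $k$ copies of $A(j,1)$ along $t=A(\mathrm{id},\tau)$ and $s=A(\mathrm{id},\sigma)$ over $A(j,0)$, with components $A(\mathrm{id},\iota_i)$. A map $\alpha\colon A\to B$ of simplicial sets, with source/target maps $s=A(\sigma),t=A(\tau)\colon A_1\to A_0$, is contractible if $\alpha_0\colon A_0\to B_0$ is surjective and the induced map $A_1\to A_0\times_{B_0}B_1\times_{B_0}A_0$, $x\mapsto(s x,\alpha_1x,t x)$, is a bijection (i.e. $\alpha$ is surjective on $0$-cells and full and faithful on $1$-cells). A Tamsamani–Simpson weak $2$-category is a presheaf on $\Theta^2$ satisfying (i) and (ii) (the Segal condition). *)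

theory Defs
  imports Main
begin

section \<open>Bicategories (Benabou), as explicit data with carrier sets\<close>

text \<open>Conventions: comp1 B g f is g o f (f first); vcomp B beta alpha is the vertical
composite beta . alpha (alpha first); hcomp B beta alpha is beta * alpha where alpha is a
2-cell between 1-cells a -> b and beta between 1-cells b -> c, so that
dom (beta * alpha) = dom beta o dom alpha.  assoc B h g f : (h o g) o f => h o (g o f),
lunit B f : 1 o f => f, runit B f : f o 1 => f.\<close>

record ('o, 'a, 'c) bicat =
  Obj :: "'o set"
  Arr :: "'a set"
  Cell :: "'c set"
  src1 :: "'a \<Rightarrow> 'o"
  trg1 :: "'a \<Rightarrow> 'o"
  dom2 :: "'c \<Rightarrow> 'a"
  cod2 :: "'c \<Rightarrow> 'a"
  comp1 :: "'a \<Rightarrow> 'a \<Rightarrow> 'a"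
  id1 :: "'o \<Rightarrow> 'a"
  vcomp :: "'c \<Rightarrow> 'c \<Rightarrow> 'c"
  hcomp :: "'c \<Rightarrow> 'c \<Rightarrow> 'c"
  id2 :: "'a \<Rightarrow> 'c"
  bassoc :: "'a \<Rightarrow> 'a \<Rightarrow> 'a \<Rightarrow> 'c"
  lunit :: "'a \<Rightarrow> 'c"
  runit :: "'a \<Rightarrow> 'c"

definition iso2 :: "('o, 'a, 'c, 'm) bicat_scheme \<Rightarrow> 'c \<Rightarrow> bool" where
  "iso2 B \<alpha> \<longleftrightarrow> \<alpha> \<in> Cell B \<and>
     (\<exists>\<beta>\<in>Cell B. dom2 B \<beta> = cod2 B \<alpha> \<and> cod2 B \<beta> = dom2 B \<alpha> \<and>
        vcomp B \<beta> \<alpha> = id2 B (dom2 B \<alpha>) \<and> vcomp B \<alpha> \<beta> = id2 B (cod2 B \<alpha>))"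

locale bicategory =
  fixes B :: "('o, 'a, 'c, 'm) bicat_scheme"
  assumes arr_ends: "\<And>f. f \<in> Arr B \<Longrightarrow> src1 B f \<in> Obj B \<and> trg1 B f \<in> Obj B"
    and id1_type: "\<And>a. a \<in> Obj B \<Longrightarrow>
          id1 B a \<in> Arr B \<and> src1 B (id1 B a) = a \<and> trg1 B (id1 B a) = a"
    and comp1_type: "\<And>f g. \<lbrakk>f \<in> Arr B; g \<in> Arr B; trg1 B f = src1 B g\<rbrakk> \<Longrightarrow>
          comp1 B g f \<in> Arr B \<and> src1 B (comp1 B g f) = src1 B f \<and> trg1 B (comp1 B g f) = trg1 B g"
    and cell_type: "\<And>\<alpha>. \<alpha> \<in> Cell B \<Longrightarrow>
          dom2 B \<alpha> \<in> Arr B \<and> cod2 B \<alpha> \<in> Arr B \<and>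
          src1 B (dom2 B \<alpha>) = src1 B (cod2 B \<alpha>) \<and> trg1 B (dom2 B \<alpha>) = trg1 B (cod2 B \<alpha>)"
    and id2_type: "\<And>f. f \<in> Arr B \<Longrightarrow> id2 B f \<in> Cell B \<and> dom2 B (id2 B f) = f \<and> cod2 B (id2 B f) = f"
    and vcomp_type: "\<And>\<alpha> \<beta>. \<lbrakk>\<alpha> \<in> Cell B; \<beta> \<in> Cell B; cod2 B \<alpha> = dom2 B \<beta>\<rbrakk> \<Longrightarrow>
          vcomp B \<beta> \<alpha> \<in> Cell B \<and> dom2 B (vcomp B \<beta> \<alpha>) = dom2 B \<alpha> \<and> cod2 B (vcomp B \<beta> \<alpha>) = cod2 B \<beta>"
    and vcomp_assoc: "\<And>\<alpha> \<beta> \<gamma>. \<lbrakk>\<alpha> \<in> Cell B; \<beta> \<in> Cell B; \<gamma> \<in> Cell B;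
          cod2 B \<alpha> = dom2 B \<beta>; cod2 B \<beta> = dom2 B \<gamma>\<rbrakk> \<Longrightarrow>
          vcomp B \<gamma> (vcomp B \<beta> \<alpha>) = vcomp B (vcomp B \<gamma> \<beta>) \<alpha>"
    and vcomp_id_left: "\<And>\<alpha>. \<alpha> \<in> Cell B \<Longrightarrow> vcomp B (id2 B (cod2 B \<alpha>)) \<alpha> = \<alpha>"
    and vcomp_id_right: "\<And>\<alpha>. \<alpha> \<in> Cell B \<Longrightarrow> vcomp B \<alpha> (id2 B (dom2 B \<alpha>)) = \<alpha>"
    and hcomp_type: "\<And>\<alpha> \<beta>. \<lbrakk>\<alpha> \<in> Cell B; \<beta> \<in> Cell B; trg1 B (dom2 B \<alpha>) = src1 B (dom2 B \<beta>)\<rbrakk> \<Longrightarrow>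
          hcomp B \<beta> \<alpha> \<in> Cell B \<and> dom2 B (hcomp B \<beta> \<alpha>) = comp1 B (dom2 B \<beta>) (dom2 B \<alpha>) \<and>
          cod2 B (hcomp B \<beta> \<alpha>) = comp1 B (cod2 B \<beta>) (cod2 B \<alpha>)"
    and hcomp_id: "\<And>f g. \<lbrakk>f \<in> Arr B; g \<in> Arr B; trg1 B f = src1 B g\<rbrakk> \<Longrightarrow>
          hcomp B (id2 B g) (id2 B f) = id2 B (comp1 B g f)"
    and interchange: "\<And>\<alpha> \<alpha>' \<beta> \<beta>'. \<lbrakk>\<alpha> \<in> Cell B; \<alpha>' \<in> Cell B; \<beta> \<in> Cell B; \<beta>' \<in> Cell B;
          cod2 B \<alpha> = dom2 B \<alpha>'; cod2 B \<beta> = dom2 B \<beta>'; trg1 B (dom2 B \<alpha>) = src1 B (dom2 B \<beta>)\<rbrakk> \<Longrightarrow>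
          hcomp B (vcomp B \<beta>' \<beta>) (vcomp B \<alpha>' \<alpha>) = vcomp B (hcomp B \<beta>' \<alpha>') (hcomp B \<beta> \<alpha>)"
    and assoc_type: "\<And>f g h. \<lbrakk>f \<in> Arr B; g \<in> Arr B; h \<in> Arr B; trg1 B f = src1 B g; trg1 B g = src1 B h\<rbrakk> \<Longrightarrow>
          iso2 B (bassoc B h g f) \<and> dom2 B (bassoc B h g f) = comp1 B (comp1 B h g) f \<and>
          cod2 B (bassoc B h g f) = comp1 B h (comp1 B g f)"
    and assoc_natural: "\<And>\<alpha> \<beta> \<gamma>. \<lbrakk>\<alpha> \<in> Cell B; \<beta> \<in> Cell B; \<gamma> \<in> Cell B;
          trg1 B (dom2 B \<alpha>) = src1 B (dom2 B \<beta>); trg1 B (dom2 B \<beta>) = src1 B (dom2 B \<gamma>)\<rbrakk> \<Longrightarrow>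
          vcomp B (bassoc B (cod2 B \<gamma>) (cod2 B \<beta>) (cod2 B \<alpha>)) (hcomp B (hcomp B \<gamma> \<beta>) \<alpha>) =
          vcomp B (hcomp B \<gamma> (hcomp B \<beta> \<alpha>)) (bassoc B (dom2 B \<gamma>) (dom2 B \<beta>) (dom2 B \<alpha>))"
    and lunit_type: "\<And>f. f \<in> Arr B \<Longrightarrow> iso2 B (lunit B f) \<and>
          dom2 B (lunit B f) = comp1 B (id1 B (trg1 B f)) f \<and> cod2 B (lunit B f) = f"
    and lunit_natural: "\<And>\<alpha>. \<alpha> \<in> Cell B \<Longrightarrow>
          vcomp B (lunit B (cod2 B \<alpha>)) (hcomp B (id2 B (id1 B (trg1 B (dom2 B \<alpha>)))) \<alpha>) =
          vcomp B \<alpha> (lunit B (dom2 B \<alpha>))"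
    and runit_type: "\<And>f. f \<in> Arr B \<Longrightarrow> iso2 B (runit B f) \<and>
          dom2 B (runit B f) = comp1 B f (id1 B (src1 B f)) \<and> cod2 B (runit B f) = f"
    and runit_natural: "\<And>\<alpha>. \<alpha> \<in> Cell B \<Longrightarrow>
          vcomp B (runit B (cod2 B \<alpha>)) (hcomp B \<alpha> (id2 B (id1 B (src1 B (dom2 B \<alpha>))))) =
          vcomp B \<alpha> (runit B (dom2 B \<alpha>))"
    and pentagon: "\<And>f g h k. \<lbrakk>f \<in> Arr B; g \<in> Arr B; h \<in> Arr B; k \<in> Arr B;
          trg1 B f = src1 B g; trg1 B g = src1 B h; trg1 B h = src1 B k\<rbrakk> \<Longrightarrow>
          vcomp B (bassoc B k h (comp1 B g f)) (bassoc B (comp1 B k h) g f) =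
          vcomp B (hcomp B (id2 B k) (bassoc B h g f))
            (vcomp B (bassoc B k (comp1 B h g) f) (hcomp B (bassoc B k h g) (id2 B f)))"
    and triangle: "\<And>f g. \<lbrakk>f \<in> Arr B; g \<in> Arr B; trg1 B f = src1 B g\<rbrakk> \<Longrightarrow>
          vcomp B (hcomp B (id2 B g) (lunit B f)) (bassoc B g (id1 B (trg1 B f)) f) =
          hcomp B (runit B g) (id2 B f)"

section \<open>The nerve of a bicategory\<close>

text \<open>An element of NB(j,k) is a quadruple (a, f, alpha, iota) with
 a u = a_u, f z u v = f^z_{uv}, alpha z u v = alpha^z_{uv}, iota z u v w = iota^z_{uvw};
 entries outside the index ranges are fixed to undefined (so the sets are exactly the
 sets of quadruples of the paper).\<close>

datatype ('o, 'a, 'c) ncell =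
  NCell "nat \<Rightarrow> 'o" "nat \<Rightarrow> nat \<Rightarrow> nat \<Rightarrow> 'a" "nat \<Rightarrow> nat \<Rightarrow> nat \<Rightarrow> 'c" "nat \<Rightarrow> nat \<Rightarrow> nat \<Rightarrow> nat \<Rightarrow> 'c"

definition nerve_data ::
  "('o, 'a, 'c, 'm) bicat_scheme \<Rightarrow> nat \<Rightarrow> nat \<Rightarrow> (nat \<Rightarrow> 'o) \<Rightarrow> (nat \<Rightarrow> nat \<Rightarrow> nat \<Rightarrow> 'a)
     \<Rightarrow> (nat \<Rightarrow> nat \<Rightarrow> nat \<Rightarrow> 'c) \<Rightarrow> (nat \<Rightarrow> nat \<Rightarrow> nat \<Rightarrow> nat \<Rightarrow> 'c) \<Rightarrow> bool" where
  "nerve_data B j k a f al io \<longleftrightarrow>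
    (\<forall>u. if u \<le> j then a u \<in> Obj B else a u = undefined) \<and>
    (\<forall>z u v. if u < v \<and> v \<le> j \<and> z \<le> k
       then f z u v \<in> Arr B \<and> src1 B (f z u v) = a u \<and> trg1 B (f z u v) = a v
       else f z u v = undefined) \<and>
    (\<forall>z u v. if u < v \<and> v \<le> j \<and> 1 \<le> z \<and> z \<le> k
       then al z u v \<in> Cell B \<and> dom2 B (al z u v) = f (z - 1) u v \<and> cod2 B (al z u v) = f z u v
       else al z u v = undefined) \<and>
    (\<forall>z u v w. if u < v \<and> v < w \<and> w \<le> j \<and> z \<le> k
       then iso2 B (io z u v w) \<and> dom2 B (io z u v w) = comp1 B (f z v w) (f z u v) \<and>
            cod2 B (io z u v w) = f z u w
       else io z u v w = undefined) \<and>
    \<comment> \<open>(A1)\<close>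
    (\<forall>z u v w. u < v \<and> v < w \<and> w \<le> j \<and> 1 \<le> z \<and> z \<le> k \<longrightarrow>
       vcomp B (io z u v w) (hcomp B (al z v w) (al z u v)) = vcomp B (al z u w) (io (z - 1) u v w)) \<and>
    \<comment> \<open>(A2)\<close>
    (\<forall>z u v w x. u < v \<and> v < w \<and> w < x \<and> x \<le> j \<and> z \<le> k \<longrightarrow>
       vcomp B (io z u w x) (vcomp B (hcomp B (id2 B (f z w x)) (io z u v w))
                                 (bassoc B (f z w x) (f z v w) (f z u v))) =
       vcomp B (io z u v x) (hcomp B (io z v w x) (id2 B (f z u v))))"

definition NB :: "('o, 'a, 'c, 'm) bicat_scheme \<Rightarrow> nat \<Rightarrow> nat \<Rightarrow> ('o, 'a, 'c) ncell set" where
  "NB B j k = {NCell a f al io | a f al io. nerve_data B j k a f al io}"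

text \<open>vseg B al fl a b is the vertical composite al b . ... . al (a+1) (for a < b),
 and the identity 2-cell on fl b if b \<le> a.\<close>

fun vseg :: "('o, 'a, 'c, 'm) bicat_scheme \<Rightarrow> (nat \<Rightarrow> 'c) \<Rightarrow> (nat \<Rightarrow> 'a) \<Rightarrow> nat \<Rightarrow> nat \<Rightarrow> 'c" where
  "vseg B al fl a 0 = id2 B (fl 0)"
| "vseg B al fl a (Suc n) =
     (if Suc n \<le> a then id2 B (fl (Suc n))
      else if n = a then al (Suc n)
      else vcomp B (al (Suc n)) (vseg B al fl a n))"

text \<open>Action of a morphism (p,q) : (l,m) -> (j,k) of Theta^2 (p : [l] -> [j], q : [m] -> [k]
 monotone), NB(p,q) : NB(j,k) -> NB(l,m), as in the paper.\<close>

definition nerve_map :: "('o, 'a, 'c, 'm) bicat_scheme \<Rightarrow> nat \<Rightarrow> nat \<Rightarrow> (nat \<Rightarrow> nat) \<Rightarrow> (nat \<Rightarrow> nat)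
    \<Rightarrow> ('o, 'a, 'c) ncell \<Rightarrow> ('o, 'a, 'c) ncell" where
  "nerve_map B l m p q x = (case x of NCell a f al io \<Rightarrow>
     let b = (\<lambda>u. if u \<le> l then a (p u) else undefined);
         g = (\<lambda>z u v. if u < v \<and> v \<le> l \<and> z \<le> m then
                (if p u \<noteq> p v then f (q z) (p u) (p v) else id1 B (a (p u)))
              else undefined);
         be = (\<lambda>z u v. if u < v \<and> v \<le> l \<and> 1 \<le> z \<and> z \<le> m then
                (if p u \<noteq> p v then vseg B (\<lambda>n. al n (p u) (p v)) (\<lambda>n. f n (p u) (p v)) (q (z - 1)) (q z)
                 else id2 B (id1 B (a (p u))))
              else undefined);
         ka = (\<lambda>z u v w. if u < v \<and> v < w \<and> w \<le> l \<and> z \<le> m then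
                (if p u \<noteq> p v \<and> p v \<noteq> p w \<and> p u \<noteq> p w then io (q z) (p u) (p v) (p w)
                 else if p u \<noteq> p v \<and> p v = p w then lunit B (g z u v)
                 else if p u = p v \<and> p v \<noteq> p w then runit B (g z v w)
                 else lunit B (id1 B (a (p u))))
              else undefined)
     in NCell b g be ka)"

section \<open>Segal maps and the Tamsamani--Simpson conditions for a presheaf on Theta^2\<close>

text \<open>A presheaf on Theta^2 is given by its sets A j k and its action act l m p q : A(j,k) -> A(l,m)
 for (p,q) : (l,m) -> (j,k).\<close>

definition sigma0 :: "nat \<Rightarrow> nat" where "sigma0 = (\<lambda>_. 0)"
definition tau0 :: "nat \<Rightarrow> nat" where "tau0 = (\<lambda>_. 1)"
definition iota :: "nat \<Rightarrow> nat \<Rightarrow> nat" where "iota i = (\<lambda>u. i - 1 + u)"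

text \<open>Wide pullback of k copies of X -> Bs (along t, s): we record the k elements together with
 the k+1 base points they connect (for k \<ge> 1 the base points are determined by the elements;
 for k = 0 the wide pullback is the base itself).\<close>

definition wpb :: "'x set \<Rightarrow> 'b set \<Rightarrow> ('x \<Rightarrow> 'b) \<Rightarrow> ('x \<Rightarrow> 'b) \<Rightarrow> nat \<Rightarrow> ('x list \<times> 'b list) set" where
  "wpb X Bs s t k = {(xs, bs). length xs = k \<and> length bs = Suc k \<and> set xs \<subseteq> X \<and> set bs \<subseteq> Bs \<and>
      (\<forall>i<k. s (xs ! i) = bs ! i \<and> t (xs ! i) = bs ! Suc i)}"

text \<open>Contractibility of a map alpha : A -> B of simplicial sets (only degrees 0,1 matter).\<close>

definition contractible ::
  "'x set \<Rightarrow> 'x set \<Rightarrow> ('x \<Rightarrow> 'x) \<Rightarrow> ('x \<Rightarrow> 'x) \<Rightarrow> 'y set \<Rightarrow> 'y set \<Rightarrow> ('y \<Rightarrow> 'y) \<Rightarrow> ('y \<Rightarrow> 'y)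
     \<Rightarrow> ('x \<Rightarrow> 'y) \<Rightarrow> ('x \<Rightarrow> 'y) \<Rightarrow> bool" where
  "contractible A0 A1 sA tA B0 B1 sB tB al0 al1 \<longleftrightarrow>
     al0 ` A0 = B0 \<and>
     bij_betw (\<lambda>x. (sA x, al1 x, tA x)) A1
       {(a, b, a'). a \<in> A0 \<and> b \<in> B1 \<and> a' \<in> A0 \<and> sB b = al0 a \<and> tB b = al0 a'}"

text \<open>Segal map S_k in simplicial degree n: NB(k,n) -> wide pullback of A(1,n) over A(0,0).\<close>

definition segal_map_1 :: "(nat \<Rightarrow> nat \<Rightarrow> (nat \<Rightarrow> nat) \<Rightarrow> (nat \<Rightarrow> nat) \<Rightarrow> 'x \<Rightarrow> 'x) \<Rightarrow> nat \<Rightarrow> nat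
    \<Rightarrow> 'x \<Rightarrow> 'x list \<times> 'x list" where
  "segal_map_1 act k n x =
     (map (\<lambda>i. act 1 n (iota i) id x) [1..<Suc k], map (\<lambda>i. act 0 0 (\<lambda>_. i) (\<lambda>_. 0) x) [0..<Suc k])"

definition segal_cond_1 :: "(nat \<Rightarrow> nat \<Rightarrow> 'x set) \<Rightarrow> (nat \<Rightarrow> nat \<Rightarrow> (nat \<Rightarrow> nat) \<Rightarrow> (nat \<Rightarrow> nat) \<Rightarrow> 'x \<Rightarrow> 'x)
    \<Rightarrow> nat \<Rightarrow> bool" where
  "segal_cond_1 A act k \<longleftrightarrow>
     contractible (A k 0) (A k 1) (act k 0 id sigma0) (act k 0 id tau0)
       (wpb (A 1 0) (A 0 0) (act 0 0 sigma0 (\<lambda>_. 0)) (act 0 0 tau0 (\<lambda>_. 0)) k)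
       (wpb (A 1 1) (A 0 0) (act 0 0 sigma0 (\<lambda>_. 0)) (act 0 0 tau0 (\<lambda>_. 0)) k)
       (\<lambda>(xs, bs). (map (act 1 0 id sigma0) xs, bs))
       (\<lambda>(xs, bs). (map (act 1 0 id tau0) xs, bs))
       (segal_map_1 act k 0) (segal_map_1 act k 1)"

definition segal_map_2 :: "(nat \<Rightarrow> nat \<Rightarrow> (nat \<Rightarrow> nat) \<Rightarrow> (nat \<Rightarrow> nat) \<Rightarrow> 'x \<Rightarrow> 'x) \<Rightarrow> nat \<Rightarrow> nat
    \<Rightarrow> 'x \<Rightarrow> 'x list \<times> 'x list" where
  "segal_map_2 act j k x =
     (map (\<lambda>i. act j 1 id (iota i) x) [1..<Suc k], map (\<lambda>i. act j 0 id (\<lambda>_. i) x) [0..<Suc k])"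

definition segal_cond_2 :: "(nat \<Rightarrow> nat \<Rightarrow> 'x set) \<Rightarrow> (nat \<Rightarrow> nat \<Rightarrow> (nat \<Rightarrow> nat) \<Rightarrow> (nat \<Rightarrow> nat) \<Rightarrow> 'x \<Rightarrow> 'x)
    \<Rightarrow> nat \<Rightarrow> nat \<Rightarrow> bool" where
  "segal_cond_2 A act j k \<longleftrightarrow>
     bij_betw (segal_map_2 act j k) (A j k) (wpb (A j 1) (A j 0) (act j 0 id sigma0) (act j 0 id tau0) k)"

end

theory Submission
  imports Defs
begin


definition inv2 :: "('o, 'a, 'c, 'm) bicat_scheme \<Rightarrow> 'c \<Rightarrow> 'c" where
  "inv2 B \<alpha> = (SOME \<beta>. \<beta> \<in> Cell B \<and> dom2 B \<beta> = cod2 B \<alpha> \<and> cod2 B \<beta> = dom2 B \<alpha> \<and>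
        vcomp B \<beta> \<alpha> = id2 B (dom2 B \<alpha>) \<and> vcomp B \<alpha> \<beta> = id2 B (cod2 B \<alpha>))"

context bicategory
begin

lemma inv2_props:
  assumes "iso2 B \<alpha>"
  shows "inv2 B \<alpha> \<in> Cell B \<and> dom2 B (inv2 B \<alpha>) = cod2 B \<alpha> \<and> cod2 B (inv2 B \<alpha>) = dom2 B \<alpha> \<and>
        vcomp B (inv2 B \<alpha>) \<alpha> = id2 B (dom2 B \<alpha>) \<and> vcomp B \<alpha> (inv2 B \<alpha>) = id2 B (cod2 B \<alpha>)"
  proof -
  from assms obtain \<beta> where "\<beta> \<in> Cell B \<and> dom2 B \<beta> = cod2 B \<alpha> \<and> cod2 B \<beta> = dom2 B \<alpha> \<and>
        vcomp B \<beta> \<alpha> = id2 B (dom2 B \<alpha>) \<and> vcomp B \<alpha> \<beta> = id2 B (cod2 B \<alpha>)"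
    unfolding iso2_def by blast
  then show ?thesis unfolding inv2_def by (rule someI)
qed

lemma iso2_cell[simp]: "iso2 B \<alpha> \<Longrightarrow> \<alpha> \<in> Cell B"
  unfolding iso2_def by blast

lemma inv2_cell[simp]: "iso2 B \<alpha> \<Longrightarrow> inv2 B \<alpha> \<in> Cell B"
  and inv2_dom[simp]: "iso2 B \<alpha> \<Longrightarrow> dom2 B (inv2 B \<alpha>) = cod2 B \<alpha>"
  and inv2_cod[simp]: "iso2 B \<alpha> \<Longrightarrow> cod2 B (inv2 B \<alpha>) = dom2 B \<alpha>"
  and inv2_left[simp]: "iso2 B \<alpha> \<Longrightarrow> vcomp B (inv2 B \<alpha>) \<alpha> = id2 B (dom2 B \<alpha>)"
  and inv2_right[simp]: "iso2 B \<alpha> \<Longrightarrow> vcomp B \<alpha> (inv2 B \<alpha>) = id2 B (cod2 B \<alpha>)"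
  using inv2_props by blast+

lemma dom_arr[simp]: "\<alpha> \<in> Cell B \<Longrightarrow> dom2 B \<alpha> \<in> Arr B"
  and cod_arr[simp]: "\<alpha> \<in> Cell B \<Longrightarrow> cod2 B \<alpha> \<in> Arr B"
  and src_cod[simp]: "\<alpha> \<in> Cell B \<Longrightarrow> src1 B (cod2 B \<alpha>) = src1 B (dom2 B \<alpha>)"
  and trg_cod[simp]: "\<alpha> \<in> Cell B \<Longrightarrow> trg1 B (cod2 B \<alpha>) = trg1 B (dom2 B \<alpha>)"
  using cell_type by auto

lemma src_obj[simp]: "f \<in> Arr B \<Longrightarrow> src1 B f \<in> Obj B"
  and trg_obj[simp]: "f \<in> Arr B \<Longrightarrow> trg1 B f \<in> Obj B"
  using arr_ends by auto

lemma id1_arr[simp]: "a \<in> Obj B \<Longrightarrow> id1 B a \<in> Arr B"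
  and id1_src[simp]: "a \<in> Obj B \<Longrightarrow> src1 B (id1 B a) = a"
  and id1_trg[simp]: "a \<in> Obj B \<Longrightarrow> trg1 B (id1 B a) = a"
  using id1_type by auto

lemma comp1_arr[simp]: "\<lbrakk>f \<in> Arr B; g \<in> Arr B; trg1 B f = src1 B g\<rbrakk> \<Longrightarrow> comp1 B g f \<in> Arr B"
  and comp1_src[simp]: "\<lbrakk>f \<in> Arr B; g \<in> Arr B; trg1 B f = src1 B g\<rbrakk> \<Longrightarrow> src1 B (comp1 B g f) = src1 B f"
  and comp1_trg[simp]: "\<lbrakk>f \<in> Arr B; g \<in> Arr B; trg1 B f = src1 B g\<rbrakk> \<Longrightarrow> trg1 B (comp1 B g f) = trg1 B g"
  using comp1_type by auto

lemma id2_cell[simp]: "f \<in> Arr B \<Longrightarrow> id2 B f \<in> Cell B"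
  and id2_dom[simp]: "f \<in> Arr B \<Longrightarrow> dom2 B (id2 B f) = f"
  and id2_cod[simp]: "f \<in> Arr B \<Longrightarrow> cod2 B (id2 B f) = f"
  using id2_type by auto

lemma vcomp_cell[simp]: "\<lbrakk>\<alpha> \<in> Cell B; \<beta> \<in> Cell B; cod2 B \<alpha> = dom2 B \<beta>\<rbrakk> \<Longrightarrow> vcomp B \<beta> \<alpha> \<in> Cell B"
  and vcomp_dom[simp]: "\<lbrakk>\<alpha> \<in> Cell B; \<beta> \<in> Cell B; cod2 B \<alpha> = dom2 B \<beta>\<rbrakk> \<Longrightarrow> dom2 B (vcomp B \<beta> \<alpha>) = dom2 B \<alpha>"
  and vcomp_cod[simp]: "\<lbrakk>\<alpha> \<in> Cell B; \<beta> \<in> Cell B; cod2 B \<alpha> = dom2 B \<beta>\<rbrakk> \<Longrightarrow> cod2 B (vcomp B \<beta> \<alpha>) = cod2 B \<beta>"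
  using vcomp_type by auto

lemma hcomp_cell[simp]: "\<lbrakk>\<alpha> \<in> Cell B; \<beta> \<in> Cell B; trg1 B (dom2 B \<alpha>) = src1 B (dom2 B \<beta>)\<rbrakk> \<Longrightarrow> hcomp B \<beta> \<alpha> \<in> Cell B"
  and hcomp_dom[simp]: "\<lbrakk>\<alpha> \<in> Cell B; \<beta> \<in> Cell B; trg1 B (dom2 B \<alpha>) = src1 B (dom2 B \<beta>)\<rbrakk> \<Longrightarrow> dom2 B (hcomp B \<beta> \<alpha>) = comp1 B (dom2 B \<beta>) (dom2 B \<alpha>)"
  and hcomp_cod[simp]: "\<lbrakk>\<alpha> \<in> Cell B; \<beta> \<in> Cell B; trg1 B (dom2 B \<alpha>) = src1 B (dom2 B \<beta>)\<rbrakk> \<Longrightarrow> cod2 B (hcomp B \<beta> \<alpha>) = comp1 B (cod2 B \<beta>) (cod2 B \<alpha>)"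
  using hcomp_type by auto

lemma assoc_iso[simp]: "\<lbrakk>f \<in> Arr B; g \<in> Arr B; h \<in> Arr B; trg1 B f = src1 B g; trg1 B g = src1 B h\<rbrakk> \<Longrightarrow> iso2 B (bassoc B h g f)"
  and assoc_dom[simp]: "\<lbrakk>f \<in> Arr B; g \<in> Arr B; h \<in> Arr B; trg1 B f = src1 B g; trg1 B g = src1 B h\<rbrakk> \<Longrightarrow> dom2 B (bassoc B h g f) = comp1 B (comp1 B h g) f"
  and assoc_cod[simp]: "\<lbrakk>f \<in> Arr B; g \<in> Arr B; h \<in> Arr B; trg1 B f = src1 B g; trg1 B g = src1 B h\<rbrakk> \<Longrightarrow> cod2 B (bassoc B h g f) = comp1 B h (comp1 B g f)"
  using assoc_type by auto

lemma assoc_cell[simp]: "\<lbrakk>f \<in> Arr B; g \<in> Arr B; h \<in> Arr B; trg1 B f = src1 B g; trg1 B g = src1 B h\<rbrakk> \<Longrightarrow> bassoc B h g f \<in> Cell B"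
  by simp

lemma vcomp_idl[simp]: "\<lbrakk>\<alpha> \<in> Cell B; f = cod2 B \<alpha>\<rbrakk> \<Longrightarrow> vcomp B (id2 B f) \<alpha> = \<alpha>"
  using vcomp_id_left by auto
lemma vcomp_idr[simp]: "\<lbrakk>\<alpha> \<in> Cell B; f = dom2 B \<alpha>\<rbrakk> \<Longrightarrow> vcomp B \<alpha> (id2 B f) = \<alpha>"
  using vcomp_id_right by auto

lemma vassoc[simp]: "\<lbrakk>\<alpha> \<in> Cell B; \<beta> \<in> Cell B; \<gamma> \<in> Cell B;
          cod2 B \<alpha> = dom2 B \<beta>; cod2 B \<beta> = dom2 B \<gamma>\<rbrakk> \<Longrightarrow>
          vcomp B (vcomp B \<gamma> \<beta>) \<alpha> = vcomp B \<gamma> (vcomp B \<beta> \<alpha>)"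
  using vcomp_assoc by auto

lemma hcomp_id2[simp]: "\<lbrakk>f \<in> Arr B; g \<in> Arr B; trg1 B f = src1 B g\<rbrakk> \<Longrightarrow>
          hcomp B (id2 B g) (id2 B f) = id2 B (comp1 B g f)"
  using hcomp_id by auto

lemma inv2_left'[simp]: "\<lbrakk>iso2 B \<alpha>; \<gamma> \<in> Cell B; cod2 B \<gamma> = dom2 B \<alpha>\<rbrakk> \<Longrightarrow> vcomp B (inv2 B \<alpha>) (vcomp B \<alpha> \<gamma>) = \<gamma>"
  by (simp del: vassoc add: vassoc[symmetric])
lemma inv2_right'[simp]: "\<lbrakk>iso2 B \<alpha>; \<gamma> \<in> Cell B; cod2 B \<gamma> = cod2 B \<alpha>\<rbrakk> \<Longrightarrow> vcomp B \<alpha> (vcomp B (inv2 B \<alpha>) \<gamma>) = \<gamma>"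
  by (simp del: vassoc add: vassoc[symmetric])

lemma id2_iso[simp]: "f \<in> Arr B \<Longrightarrow> iso2 B (id2 B f)"
  unfolding iso2_def by (rule conjI, simp, rule bexI[of _ "id2 B f"]) auto

lemma inv2_iso[simp]: "iso2 B \<alpha> \<Longrightarrow> iso2 B (inv2 B \<alpha>)"
  unfolding iso2_def[of B "inv2 B \<alpha>"] by (intro conjI bexI[of _ \<alpha>]) auto

lemma interchange': "\<lbrakk>\<alpha> \<in> Cell B; \<alpha>' \<in> Cell B; \<beta> \<in> Cell B; \<beta>' \<in> Cell B;
          cod2 B \<alpha> = dom2 B \<alpha>'; cod2 B \<beta> = dom2 B \<beta>'; trg1 B (dom2 B \<alpha>) = src1 B (dom2 B \<beta>)\<rbrakk> \<Longrightarrow>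
          vcomp B (hcomp B \<beta>' \<alpha>') (hcomp B \<beta> \<alpha>) = hcomp B (vcomp B \<beta>' \<beta>) (vcomp B \<alpha>' \<alpha>)"
  using interchange by auto

lemma hcomp_iso[simp]:
  assumes "iso2 B \<alpha>" "iso2 B \<beta>" "trg1 B (dom2 B \<alpha>) = src1 B (dom2 B \<beta>)"
  shows "iso2 B (hcomp B \<beta> \<alpha>)"
  unfolding iso2_def
proof (intro conjI bexI[of _ "hcomp B (inv2 B \<beta>) (inv2 B \<alpha>)"])
  show "hcomp B \<beta> \<alpha> \<in> Cell B" using assms by simp
  show "hcomp B (inv2 B \<beta>) (inv2 B \<alpha>) \<in> Cell B" using assms by simp
  show "dom2 B (hcomp B (inv2 B \<beta>) (inv2 B \<alpha>)) = cod2 B (hcomp B \<beta> \<alpha>)" using assms by simp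
  show "cod2 B (hcomp B (inv2 B \<beta>) (inv2 B \<alpha>)) = dom2 B (hcomp B \<beta> \<alpha>)" using assms by simp
  show "vcomp B (hcomp B (inv2 B \<beta>) (inv2 B \<alpha>)) (hcomp B \<beta> \<alpha>) = id2 B (dom2 B (hcomp B \<beta> \<alpha>))"
    using assms by (simp add: interchange')
  show "vcomp B (hcomp B \<beta> \<alpha>) (hcomp B (inv2 B \<beta>) (inv2 B \<alpha>)) = id2 B (cod2 B (hcomp B \<beta> \<alpha>))"
    using assms by (simp add: interchange')
qed

lemma iso_cancel_right:
  assumes "iso2 B \<iota>" "X \<in> Cell B" "Y \<in> Cell B" "dom2 B X = cod2 B \<iota>" "dom2 B Y = cod2 B \<iota>"
    "vcomp B X \<iota> = vcomp B Y \<iota>"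
  shows "X = Y"
proof -
  have "X = vcomp B (vcomp B X \<iota>) (inv2 B \<iota>)" using assms(1,2,4) by simp
  also have "\<dots> = vcomp B (vcomp B Y \<iota>) (inv2 B \<iota>)" using assms(6) by simp
  also have "\<dots> = Y" using assms(1,3,5) by simp
  finally show ?thesis .
qed

lemma iso_cancel_left:
  assumes "iso2 B \<iota>" "X \<in> Cell B" "Y \<in> Cell B" "cod2 B X = dom2 B \<iota>" "cod2 B Y = dom2 B \<iota>"
    "vcomp B \<iota> X = vcomp B \<iota> Y"
  shows "X = Y"
proof -
  have "X = vcomp B (inv2 B \<iota>) (vcomp B \<iota> X)" using assms(1,2,4) by simp
  also have "\<dots> = vcomp B (inv2 B \<iota>) (vcomp B \<iota> Y)" using assms(6) by simp
  also have "\<dots> = Y" using assms(1,3,5) by simp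
  finally show ?thesis .
qed

end


fun nA where "nA (NCell a f al io) = a"
fun nF where "nF (NCell a f al io) = f"
fun nAL where "nAL (NCell a f al io) = al"
fun nIO where "nIO (NCell a f al io) = io"

lemma ncell_eta: "x = NCell (nA x) (nF x) (nAL x) (nIO x)"
  by (cases x) auto

lemma NB_mem: "x \<in> NB B j k \<longleftrightarrow> nerve_data B j k (nA x) (nF x) (nAL x) (nIO x)"
  unfolding NB_def by (cases x) auto

lemma NB_NCell: "NCell a f al io \<in> NB B j k \<longleftrightarrow> nerve_data B j k a f al io"
  unfolding NB_def by auto

lemma vseg_step[simp]: "vseg B al fl n (Suc n) = al (Suc n)"
  by simp

definition pt :: "'o \<Rightarrow> ('o, 'a, 'c) ncell" where
  "pt x0 = NCell (\<lambda>u. if u = 0 then x0 else undefined) (\<lambda>_ _ _. undefined) (\<lambda>_ _ _. undefined) (\<lambda>_ _ _ _. undefined)"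

lemma nd_0: "nerve_data B 0 k a f al io \<longleftrightarrow> a 0 \<in> Obj B \<and> NCell a f al io = pt (a 0)"
  unfolding nerve_data_def pt_def by (auto simp: fun_eq_iff)

lemma NB_0: "NB B 0 k = pt ` Obj B"
proof -
  have "x \<in> NB B 0 k \<longleftrightarrow> x \<in> pt ` Obj B" for x
  proof
    assume "x \<in> NB B 0 k"
    then show "x \<in> pt ` Obj B" unfolding NB_mem nd_0 using ncell_eta[of x] by auto
  next
    assume "x \<in> pt ` Obj B"
    then obtain o0 where "o0 \<in> Obj B" "x = pt o0" by auto
    then show "x \<in> NB B 0 k" unfolding NB_mem nd_0 by (simp add: pt_def)
  qed
  then show ?thesis by blast
qed

lemma nd_obj: "nerve_data B j k a f al io \<Longrightarrow> u \<le> j \<Longrightarrow> a u \<in> Obj B"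
  unfolding nerve_data_def by metis
lemma nd_f: "nerve_data B j k a f al io \<Longrightarrow> u < v \<Longrightarrow> v \<le> j \<Longrightarrow> z \<le> k \<Longrightarrow>
   f z u v \<in> Arr B \<and> src1 B (f z u v) = a u \<and> trg1 B (f z u v) = a v"
  unfolding nerve_data_def by metis
lemma nd_f_undef: "nerve_data B j k a f al io \<Longrightarrow> \<not> (u < v \<and> v \<le> j \<and> z \<le> k) \<Longrightarrow> f z u v = undefined"
  unfolding nerve_data_def by metis
lemma nd_al: "nerve_data B j k a f al io \<Longrightarrow> u < v \<Longrightarrow> v \<le> j \<Longrightarrow> 1 \<le> z \<Longrightarrow> z \<le> k \<Longrightarrow>
   al z u v \<in> Cell B \<and> dom2 B (al z u v) = f (z - 1) u v \<and> cod2 B (al z u v) = f z u v"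
  unfolding nerve_data_def by metis
lemma nd_al_undef: "nerve_data B j k a f al io \<Longrightarrow> \<not> (u < v \<and> v \<le> j \<and> 1 \<le> z \<and> z \<le> k) \<Longrightarrow> al z u v = undefined"
  unfolding nerve_data_def by metis
lemma nd_io: "nerve_data B j k a f al io \<Longrightarrow> u < v \<Longrightarrow> v < w \<Longrightarrow> w \<le> j \<Longrightarrow> z \<le> k \<Longrightarrow>
   iso2 B (io z u v w) \<and> dom2 B (io z u v w) = comp1 B (f z v w) (f z u v) \<and> cod2 B (io z u v w) = f z u w"
  unfolding nerve_data_def by metis
lemma nd_io_undef: "nerve_data B j k a f al io \<Longrightarrow> \<not> (u < v \<and> v < w \<and> w \<le> j \<and> z \<le> k) \<Longrightarrow> io z u v w = undefined"
  unfolding nerve_data_def by metis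
lemma nd_A1: "nerve_data B j k a f al io \<Longrightarrow> u < v \<Longrightarrow> v < w \<Longrightarrow> w \<le> j \<Longrightarrow> 1 \<le> z \<Longrightarrow> z \<le> k \<Longrightarrow>
   vcomp B (io z u v w) (hcomp B (al z v w) (al z u v)) = vcomp B (al z u w) (io (z - 1) u v w)"
  unfolding nerve_data_def by metis
lemma nd_A2: "nerve_data B j k a f al io \<Longrightarrow> u < v \<Longrightarrow> v < w \<Longrightarrow> w < x \<Longrightarrow> x \<le> j \<Longrightarrow> z \<le> k \<Longrightarrow>
       vcomp B (io z u w x) (vcomp B (hcomp B (id2 B (f z w x)) (io z u v w))
                                 (bassoc B (f z w x) (f z v w) (f z u v))) =
       vcomp B (io z u v x) (hcomp B (io z v w x) (id2 B (f z u v)))"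
  unfolding nerve_data_def by metis

lemma nerve_data_intro:
  assumes "\<And>u. u \<le> j \<Longrightarrow> a u \<in> Obj B" "\<And>u. \<not> u \<le> j \<Longrightarrow> a u = undefined"
   "\<And>z u v. u < v \<Longrightarrow> v \<le> j \<Longrightarrow> z \<le> k \<Longrightarrow>
      f z u v \<in> Arr B \<and> src1 B (f z u v) = a u \<and> trg1 B (f z u v) = a v"
   "\<And>z u v. \<not> (u < v \<and> v \<le> j \<and> z \<le> k) \<Longrightarrow> f z u v = undefined"
   "\<And>z u v. u < v \<Longrightarrow> v \<le> j \<Longrightarrow> 1 \<le> z \<Longrightarrow> z \<le> k \<Longrightarrow>
      al z u v \<in> Cell B \<and> dom2 B (al z u v) = f (z - 1) u v \<and> cod2 B (al z u v) = f z u v"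
   "\<And>z u v. \<not> (u < v \<and> v \<le> j \<and> 1 \<le> z \<and> z \<le> k) \<Longrightarrow> al z u v = undefined"
   "\<And>z u v w. u < v \<Longrightarrow> v < w \<Longrightarrow> w \<le> j \<Longrightarrow> z \<le> k \<Longrightarrow>
      iso2 B (io z u v w) \<and> dom2 B (io z u v w) = comp1 B (f z v w) (f z u v) \<and> cod2 B (io z u v w) = f z u w"
   "\<And>z u v w. \<not> (u < v \<and> v < w \<and> w \<le> j \<and> z \<le> k) \<Longrightarrow> io z u v w = undefined"
   "\<And>z u v w. u < v \<Longrightarrow> v < w \<Longrightarrow> w \<le> j \<Longrightarrow> 1 \<le> z \<Longrightarrow> z \<le> k \<Longrightarrow>
      vcomp B (io z u v w) (hcomp B (al z v w) (al z u v)) = vcomp B (al z u w) (io (z - 1) u v w)"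
   "\<And>z u v w x. u < v \<Longrightarrow> v < w \<Longrightarrow> w < x \<Longrightarrow> x \<le> j \<Longrightarrow> z \<le> k \<Longrightarrow>
       vcomp B (io z u w x) (vcomp B (hcomp B (id2 B (f z w x)) (io z u v w))
                                 (bassoc B (f z w x) (f z v w) (f z u v))) =
       vcomp B (io z u v x) (hcomp B (io z v w x) (id2 B (f z u v)))"
  shows "nerve_data B j k a f al io"
  unfolding nerve_data_def using assms by (intro conjI allI) (simp_all split: if_split)

lemma nd_undef_a: "nerve_data B j k a f al io \<Longrightarrow> \<not> u \<le> j \<Longrightarrow> a u = undefined"
  unfolding nerve_data_def by metis

lemma nm_point:
  assumes "nerve_data B j k a f al io" "p 0 \<le> j"
  shows "nerve_map B 0 0 p q (NCell a f al io) = pt (a (p 0))" and "a (p 0) \<in> Obj B"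
proof -
  show "nerve_map B 0 0 p q (NCell a f al io) = pt (a (p 0))"
    unfolding nerve_map_def pt_def by (auto simp: fun_eq_iff Let_def)
  show "a (p 0) \<in> Obj B" using assms unfolding nerve_data_def by metis
qed

lemma nm_vert:
  assumes nd: "nerve_data B j k a f al io" and q: "\<forall>z\<le>m. q z = c + z" and cm: "c + m \<le> k"
  shows "nerve_map B j m id q (NCell a f al io) =
     NCell a (\<lambda>z u v. if u < v \<and> v \<le> j \<and> z \<le> m then f (c + z) u v else undefined)
       (\<lambda>z u v. if u < v \<and> v \<le> j \<and> 1 \<le> z \<and> z \<le> m then al (c + z) u v else undefined)
       (\<lambda>z u v w. if u < v \<and> v < w \<and> w \<le> j \<and> z \<le> m then io (c + z) u v w else undefined)"
    (is "?L = ?R")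
proof -
  have a: "(\<lambda>u. if u \<le> j then a u else undefined) = a"
    using nd_undef_a[OF nd] by (auto simp: fun_eq_iff)
  have vs: "vseg B (\<lambda>n. al n u v) (\<lambda>n. f n u v) (q (z - 1)) (q z) = al (c + z) u v"
    if zz: "1 \<le> z" "z \<le> m" for z u v
  proof -
    obtain z' where z': "z = Suc z'" using zz by (cases z) auto
    have "q (z - 1) = c + z'" "q z = Suc (c + z')" using q zz z' by auto
    then show ?thesis using z' by simp
  qed
  have be: "(\<lambda>z u v. if u < v \<and> v \<le> j \<and> 1 \<le> z \<and> z \<le> m then
                (if id u \<noteq> id v then vseg B (\<lambda>n. al n (id u) (id v)) (\<lambda>n. f n (id u) (id v)) (q (z - 1)) (q z)
                 else id2 B (id1 B (a (id u))))
              else undefined) =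
     (\<lambda>z u v. if u < v \<and> v \<le> j \<and> 1 \<le> z \<and> z \<le> m then al (c + z) u v else undefined)"
    using vs by (auto simp: fun_eq_iff)
  show ?thesis
    unfolding nerve_map_def Let_def ncell.case a be using q nd_undef_a[OF nd]
    by (auto simp: fun_eq_iff)
qed

lemma nm_vert_nd:
  assumes nd: "nerve_data B j k a f al io" and cm: "c + m \<le> k"
  shows "nerve_data B j m a (\<lambda>z u v. if u < v \<and> v \<le> j \<and> z \<le> m then f (c + z) u v else undefined)
       (\<lambda>z u v. if u < v \<and> v \<le> j \<and> 1 \<le> z \<and> z \<le> m then al (c + z) u v else undefined)
       (\<lambda>z u v w. if u < v \<and> v < w \<and> w \<le> j \<and> z \<le> m then io (c + z) u v w else undefined)"
proof -
  have h: "c + z - 1 = c + (z - 1)" if "1 \<le> z" for z using that by simp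
  note X = nd_obj[OF nd] nd_undef_a[OF nd] nd_f[OF nd] nd_al[OF nd] nd_io[OF nd] nd_A1[OF nd] nd_A2[OF nd]
  show ?thesis
    apply (rule nerve_data_intro)
    using X cm h by auto
qed


lemma nm_horiz:
  assumes nd: "nerve_data B j k a f al io" and p: "\<forall>u\<le>l. p u = c + u" and cl: "c + l \<le> j"
  shows "nerve_map B l k p id (NCell a f al io) =
     NCell (\<lambda>u. if u \<le> l then a (c + u) else undefined)
       (\<lambda>z u v. if u < v \<and> v \<le> l \<and> z \<le> k then f z (c + u) (c + v) else undefined)
       (\<lambda>z u v. if u < v \<and> v \<le> l \<and> 1 \<le> z \<and> z \<le> k then al z (c + u) (c + v) else undefined)
       (\<lambda>z u v w. if u < v \<and> v < w \<and> w \<le> l \<and> z \<le> k then io z (c + u) (c + v) (c + w) else undefined)"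
proof -
  have vs: "vseg B (\<lambda>n. al n x y) (\<lambda>n. f n x y) (id (z - 1)) (id z) = al z x y"
    if zz: "1 \<le> z" for z x y
  proof -
    obtain z' where z': "z = Suc z'" using zz by (cases z) auto
    then show ?thesis by simp
  qed
  have be: "(\<lambda>z u v. if u < v \<and> v \<le> l \<and> 1 \<le> z \<and> z \<le> k then
                (if p u \<noteq> p v then vseg B (\<lambda>n. al n (p u) (p v)) (\<lambda>n. f n (p u) (p v)) (id (z - 1)) (id z)
                 else id2 B (id1 B (a (p u))))
              else undefined) =
     (\<lambda>z u v. if u < v \<and> v \<le> l \<and> 1 \<le> z \<and> z \<le> k then al z (c + u) (c + v) else undefined)"
    using vs p by (auto simp: fun_eq_iff)
  show ?thesis
    unfolding nerve_map_def Let_def ncell.case be using p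
    by (auto simp: fun_eq_iff)
qed

lemma nm_horiz_nd:
  assumes nd: "nerve_data B j k a f al io" and cl: "c + l \<le> j"
  shows "nerve_data B l k (\<lambda>u. if u \<le> l then a (c + u) else undefined)
       (\<lambda>z u v. if u < v \<and> v \<le> l \<and> z \<le> k then f z (c + u) (c + v) else undefined)
       (\<lambda>z u v. if u < v \<and> v \<le> l \<and> 1 \<le> z \<and> z \<le> k then al z (c + u) (c + v) else undefined)
       (\<lambda>z u v w. if u < v \<and> v < w \<and> w \<le> l \<and> z \<le> k then io z (c + u) (c + v) (c + w) else undefined)"
proof -
  note X = nd_obj[OF nd] nd_undef_a[OF nd] nd_f[OF nd] nd_al[OF nd] nd_io[OF nd] nd_A1[OF nd] nd_A2[OF nd]
  show ?thesis
    apply (rule nerve_data_intro)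
    using X cl by auto
qed


definition vres :: "nat \<Rightarrow> nat \<Rightarrow> nat \<Rightarrow> ('o, 'a, 'c) ncell \<Rightarrow> ('o, 'a, 'c) ncell" where
  "vres j m c x = NCell (nA x) (\<lambda>z u v. if u < v \<and> v \<le> j \<and> z \<le> m then nF x (c + z) u v else undefined)
       (\<lambda>z u v. if u < v \<and> v \<le> j \<and> 1 \<le> z \<and> z \<le> m then nAL x (c + z) u v else undefined)
       (\<lambda>z u v w. if u < v \<and> v < w \<and> w \<le> j \<and> z \<le> m then nIO x (c + z) u v w else undefined)"

lemma vres_nm:
  assumes "x \<in> NB B j k" "\<forall>z\<le>m. q z = c + z" "c + m \<le> k"
  shows "nerve_map B j m id q x = vres j m c x"
  using nm_vert[of B j k "nA x" "nF x" "nAL x" "nIO x" m q c] assms ncell_eta[of x]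
  unfolding NB_mem vres_def by simp

lemma vres_NB:
  assumes "x \<in> NB B j k" "c + m \<le> k"
  shows "vres j m c x \<in> NB B j m"
  using nm_vert_nd[of B j k "nA x" "nF x" "nAL x" "nIO x" c m] assms
  unfolding NB_mem vres_def by simp

lemma vres_vres:
  assumes "c' + m' \<le> m"
  shows "vres j m' c' (vres j m c x) = vres j m' (c + c') x"
  using assms unfolding vres_def by (auto simp: fun_eq_iff add.assoc)

lemma iota_shift: "1 \<le> i \<Longrightarrow> \<forall>z\<le>m. iota i z = (i - 1) + z"
  unfolding iota_def by simp

lemma segal_map_2_eq:
  assumes "x \<in> NB B j k"
  shows "segal_map_2 (nerve_map B) j k x = (map (\<lambda>i. vres j 1 i x) [0..<k], map (\<lambda>i. vres j 0 i x) [0..<Suc k])"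
proof -
  have "map (\<lambda>i. nerve_map B j 1 id (iota i) x) [1..<Suc k] = map (\<lambda>i. vres j 1 (i - 1) x) [1..<Suc k]"
    using assms by (auto intro!: vres_nm simp: iota_def)
  also have "\<dots> = map (\<lambda>i. vres j 1 i x) [0..<k]"
    by (simp add: map_Suc_upt[symmetric] del: upt_Suc) 
  finally have 1: "map (\<lambda>i. nerve_map B j 1 id (iota i) x) [1..<Suc k] = map (\<lambda>i. vres j 1 i x) [0..<k]" .
  have 2: "map (\<lambda>i. nerve_map B j 0 id (\<lambda>_. i) x) [0..<Suc k] = map (\<lambda>i. vres j 0 i x) [0..<Suc k]"
    using assms by (auto intro!: vres_nm)
  show ?thesis unfolding segal_map_2_def 1 2 ..
qed


lemma vres_sigma: "x \<in> NB B j 1 \<Longrightarrow> nerve_map B j 0 id sigma0 x = vres j 0 0 x"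
  by (rule vres_nm) (auto simp: sigma0_def)
lemma vres_tau: "x \<in> NB B j 1 \<Longrightarrow> nerve_map B j 0 id tau0 x = vres j 0 1 x"
  by (rule vres_nm) (auto simp: tau0_def)

lemma ncell_eqI:
  assumes "nA x = nA y" "nF x = nF y" "nAL x = nAL y" "nIO x = nIO y"
  shows "x = y"
  using assms ncell_eta[of x] ncell_eta[of y] by metis

lemma vres_comp:
  shows "nA (vres j m c x) = nA x"
    "nF (vres j m c x) z u v = (if u < v \<and> v \<le> j \<and> z \<le> m then nF x (c + z) u v else undefined)"
    "nAL (vres j m c x) z u v = (if u < v \<and> v \<le> j \<and> 1 \<le> z \<and> z \<le> m then nAL x (c + z) u v else undefined)"
    "nIO (vres j m c x) z u v w = (if u < v \<and> v < w \<and> w \<le> j \<and> z \<le> m then nIO x (c + z) u v w else undefined)"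
  unfolding vres_def by simp_all

lemma vres_at:
  "u < v \<Longrightarrow> v \<le> j \<Longrightarrow> z \<le> m \<Longrightarrow> nF (vres j m c x) z u v = nF x (c + z) u v"
  "u < v \<Longrightarrow> v \<le> j \<Longrightarrow> 1 \<le> z \<Longrightarrow> z \<le> m \<Longrightarrow> nAL (vres j m c x) z u v = nAL x (c + z) u v"
  "u < v \<Longrightarrow> v < w \<Longrightarrow> w \<le> j \<Longrightarrow> z \<le> m \<Longrightarrow> nIO (vres j m c x) z u v w = nIO x (c + z) u v w"
  by (simp_all add: vres_comp)

lemma segal2_into:
  assumes x: "x \<in> NB B j k"
  shows "segal_map_2 (nerve_map B) j k x \<in> wpb (NB B j 1) (NB B j 0) (nerve_map B j 0 id sigma0) (nerve_map B j 0 id tau0) k"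
proof -
  have "vres j 1 i x \<in> NB B j 1" if "i < k" for i using that x by (intro vres_NB) auto
  moreover have "vres j 0 i x \<in> NB B j 0" if "i < Suc k" for i using that x by (intro vres_NB) auto
  ultimately show ?thesis
    unfolding segal_map_2_eq[OF x] wpb_def
    by (auto simp: vres_sigma vres_tau vres_vres nth_map_upt simp del: upt_Suc)
qed

lemma segal2_inj:
  assumes x: "x \<in> NB B j k" and y: "y \<in> NB B j k"
    and eq: "segal_map_2 (nerve_map B) j k x = segal_map_2 (nerve_map B) j k y"
  shows "x = y"
proof -
  from eq have m1: "map (\<lambda>i. vres j 1 i x) [0..<k] = map (\<lambda>i. vres j 1 i y) [0..<k]"
    and m0: "map (\<lambda>i. vres j 0 i x) [0..<Suc k] = map (\<lambda>i. vres j 0 i y) [0..<Suc k]"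
    unfolding segal_map_2_eq[OF x] segal_map_2_eq[OF y] by simp_all
  have e1: "vres j 1 i x = vres j 1 i y" if "i < k" for i
    using that m1 unfolding map_eq_conv by (simp del: upt_Suc)
  have e0: "vres j 0 i x = vres j 0 i y" if "i < Suc k" for i
    using that m0 unfolding map_eq_conv by (simp del: upt_Suc)
  note dx = x[unfolded NB_mem] and dy = y[unfolded NB_mem]
  show ?thesis
  proof (rule ncell_eqI)
    show "nA x = nA y" using arg_cong[OF e0[of 0], of nA] by (simp add: vres_comp)
    show "nF x = nF y"
    proof (intro ext)
      fix z u v
      show "nF x z u v = nF y z u v"
      proof (cases "u < v \<and> v \<le> j \<and> z \<le> k")
        case True
        then show ?thesis using fun_cong[OF fun_cong[OF fun_cong[OF arg_cong[OF e0[of z], of nF]]], of 0 u v]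
          by (simp add: vres_comp)
      next
        case False
        then show ?thesis using nd_f_undef[OF dx] nd_f_undef[OF dy] by metis
      qed
    qed
    show "nIO x = nIO y"
    proof (intro ext)
      fix z u v w
      show "nIO x z u v w = nIO y z u v w"
      proof (cases "u < v \<and> v < w \<and> w \<le> j \<and> z \<le> k")
        case True
        then show ?thesis using fun_cong[OF fun_cong[OF fun_cong[OF fun_cong[OF arg_cong[OF e0[of z], of nIO]]]], of 0 u v w]
          by (simp add: vres_comp)
      next
        case False
        then show ?thesis using nd_io_undef[OF dx] nd_io_undef[OF dy] by metis
      qed
    qed
    show "nAL x = nAL y"
    proof (intro ext)
      fix z u v
      show "nAL x z u v = nAL y z u v"
      proof (cases "u < v \<and> v \<le> j \<and> 1 \<le> z \<and> z \<le> k")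
        case True
        then show ?thesis using fun_cong[OF fun_cong[OF fun_cong[OF arg_cong[OF e1[of "z - 1"], of nAL]]], of 1 u v]
          by (simp add: vres_comp) linarith
      next
        case False
        then show ?thesis using nd_al_undef[OF dx] nd_al_undef[OF dy] by metis
      qed
    qed
  qed
qed


lemma segal2_surj:
  assumes w: "(xs, bs) \<in> wpb (NB B j 1) (NB B j 0) (nerve_map B j 0 id sigma0) (nerve_map B j 0 id tau0) k"
  shows "\<exists>x\<in>NB B j k. segal_map_2 (nerve_map B) j k x = (xs, bs)"
proof -
  have lx: "length xs = k" and lb: "length bs = Suc k" and xsN: "\<And>i. i < k \<Longrightarrow> xs ! i \<in> NB B j 1"
    and bsN: "\<And>i. i < Suc k \<Longrightarrow> bs ! i \<in> NB B j 0"
    and st0: "\<And>i. i < k \<Longrightarrow> nerve_map B j 0 id sigma0 (xs ! i) = bs ! i \<and> nerve_map B j 0 id tau0 (xs ! i) = bs ! Suc i"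
    using w unfolding wpb_def by auto
  have st: "vres j 0 0 (xs ! i) = bs ! i \<and> vres j 0 1 (xs ! i) = bs ! Suc i" if "i < k" for i
    using st0[OF that] vres_sigma[OF xsN[OF that]] vres_tau[OF xsN[OF that]] by simp
  note dx = xsN[unfolded NB_mem] and db = bsN[unfolded NB_mem]
  have aeq: "nA (bs ! i) = nA (bs ! 0)" if "i < Suc k" for i
    using that
  proof (induction i)
    case (Suc i)
    then have "i < k" by simp
    then have "nA (bs ! Suc i) = nA (bs ! i)" using st[of i] by (metis vres_comp(1))
    then show ?case using Suc by simp
  qed simp
  have fs: "nF (xs ! i) 0 u v = nF (bs ! i) 0 u v" "nF (xs ! i) 1 u v = nF (bs ! Suc i) 0 u v"
    if "i < k" "u < v" "v \<le> j" for i u v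
  proof -
    from st[OF that(1)] have "nF (bs ! i) 0 u v = nF (vres j 0 0 (xs ! i)) 0 u v"
      "nF (bs ! Suc i) 0 u v = nF (vres j 0 1 (xs ! i)) 0 u v" by simp_all
    then show "nF (xs ! i) 0 u v = nF (bs ! i) 0 u v" "nF (xs ! i) 1 u v = nF (bs ! Suc i) 0 u v"
      using that by (simp_all add: vres_at)
  qed
  have ios: "nIO (xs ! i) 0 u v w = nIO (bs ! i) 0 u v w" "nIO (xs ! i) 1 u v w = nIO (bs ! Suc i) 0 u v w"
    if "i < k" "u < v" "v < w" "w \<le> j" for i u v w
  proof -
    from st[OF that(1)] have "nIO (bs ! i) 0 u v w = nIO (vres j 0 0 (xs ! i)) 0 u v w"
      "nIO (bs ! Suc i) 0 u v w = nIO (vres j 0 1 (xs ! i)) 0 u v w" by simp_all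
    then show "nIO (xs ! i) 0 u v w = nIO (bs ! i) 0 u v w" "nIO (xs ! i) 1 u v w = nIO (bs ! Suc i) 0 u v w"
      using that by (simp_all add: vres_at)
  qed
  have as: "nA (xs ! i) = nA (bs ! 0)" if "i < k" for i
    using st[OF that] aeq[of i] that by (metis less_SucI vres_comp(1))
  define A where "A = nA (bs ! 0)"
  define F where "F = (\<lambda>z u v. if u < v \<and> v \<le> j \<and> z \<le> k then nF (bs ! z) 0 u v else undefined)"
  define AL where "AL = (\<lambda>z u v. if u < v \<and> v \<le> j \<and> 1 \<le> z \<and> z \<le> k then nAL (xs ! (z - 1)) 1 u v else undefined)"
  define IO where "IO = (\<lambda>z u v w. if u < v \<and> v < w \<and> w \<le> j \<and> z \<le> k then nIO (bs ! z) 0 u v w else undefined)"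
  have nd: "nerve_data B j k A F AL IO"
  proof (rule nerve_data_intro)
    show "A u \<in> Obj B" if "u \<le> j" for u using nd_obj[OF db[of 0] that] by (simp add: A_def)
    show "A u = undefined" if "\<not> u \<le> j" for u using nd_undef_a[OF db[of 0] that] by (simp add: A_def)
    show "F z u v \<in> Arr B \<and> src1 B (F z u v) = A u \<and> trg1 B (F z u v) = A v"
      if "u < v" "v \<le> j" "z \<le> k" for z u v
      using nd_f[OF db[of z] that(1,2), of 0] that aeq[of z] by (simp add: F_def A_def)
    show "F z u v = undefined" if "\<not> (u < v \<and> v \<le> j \<and> z \<le> k)" for z u v
      using that by (auto simp: F_def)
    show "AL z u v \<in> Cell B \<and> dom2 B (AL z u v) = F (z - 1) u v \<and> cod2 B (AL z u v) = F z u v"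
      if h: "u < v" "v \<le> j" "1 \<le> z" "z \<le> k" for z u v
    proof -
      obtain z' where z': "z = Suc z'" using h by (cases z) auto
      show ?thesis using nd_al[OF dx[of z'] that(1,2), of 1] fs[of z' u v] that z' by (simp add: F_def AL_def)
    qed
    show "AL z u v = undefined" if "\<not> (u < v \<and> v \<le> j \<and> 1 \<le> z \<and> z \<le> k)" for z u v
      using that by (auto simp: AL_def)
    show "iso2 B (IO z u v w) \<and> dom2 B (IO z u v w) = comp1 B (F z v w) (F z u v) \<and> cod2 B (IO z u v w) = F z u w"
      if "u < v" "v < w" "w \<le> j" "z \<le> k" for z u v w
      using nd_io[OF db[of z] that(1,2,3), of 0] that by (simp add: F_def IO_def)
    show "IO z u v w = undefined" if "\<not> (u < v \<and> v < w \<and> w \<le> j \<and> z \<le> k)" for z u v w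
      using that by (auto simp: IO_def)
    show "vcomp B (IO z u v w) (hcomp B (AL z v w) (AL z u v)) = vcomp B (AL z u w) (IO (z - 1) u v w)"
      if h: "u < v" "v < w" "w \<le> j" "1 \<le> z" "z \<le> k" for z u v w
    proof -
      obtain z' where z': "z = Suc z'" using h by (cases z) auto
      show ?thesis using nd_A1[OF dx[of z'] that(1,2,3), of 1] ios[of z' u v w] that z'
        by (simp add: IO_def AL_def)
    qed
    show "vcomp B (IO z u w x) (vcomp B (hcomp B (id2 B (F z w x)) (IO z u v w))
                                 (bassoc B (F z w x) (F z v w) (F z u v))) =
       vcomp B (IO z u v x) (hcomp B (IO z v w x) (id2 B (F z u v)))"
      if "u < v" "v < w" "w < x" "x \<le> j" "z \<le> k" for z u v w x
      using nd_A2[OF db[of z] that(1,2,3,4), of 0] that by (simp add: F_def IO_def)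
  qed
  define x where "x = NCell A F AL IO"
  have xN: "x \<in> NB B j k" unfolding x_def NB_NCell by (rule nd)
  have c1: "vres j 1 i x = xs ! i" if i: "i < k" for i
  proof (rule ncell_eqI)
    show "nA (vres j 1 i x) = nA (xs ! i)" using as[OF i] by (simp add: vres_comp x_def A_def)
    show "nF (vres j 1 i x) = nF (xs ! i)"
    proof (intro ext)
      fix z u v
      show "nF (vres j 1 i x) z u v = nF (xs ! i) z u v"
      proof (cases "u < v \<and> v \<le> j \<and> z \<le> 1")
        case True
        then consider "z = 0" | "z = 1" by linarith
        then show ?thesis using True fs[OF i, of u v] i by cases (simp_all add: vres_comp x_def F_def)
      next
        case False
        then show ?thesis using nd_f_undef[OF dx[OF i]] by (auto simp: vres_comp)
      qed
    qed
    show "nAL (vres j 1 i x) = nAL (xs ! i)"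
    proof (intro ext)
      fix z u v
      show "nAL (vres j 1 i x) z u v = nAL (xs ! i) z u v"
      proof (cases "u < v \<and> v \<le> j \<and> 1 \<le> z \<and> z \<le> 1")
        case True
        then have z1: "z = Suc 0" by linarith
        show ?thesis using True i unfolding z1 by (simp add: vres_comp x_def AL_def)
      next
        case False
        then show ?thesis using nd_al_undef[OF dx[OF i]] by (auto simp: vres_comp)
      qed
    qed
    show "nIO (vres j 1 i x) = nIO (xs ! i)"
    proof (intro ext)
      fix z u v w
      show "nIO (vres j 1 i x) z u v w = nIO (xs ! i) z u v w"
      proof (cases "u < v \<and> v < w \<and> w \<le> j \<and> z \<le> 1")
        case True
        then consider "z = 0" | "z = 1" by linarith
        then show ?thesis using True ios[OF i, of u v w] i by cases (simp_all add: vres_comp x_def IO_def)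
      next
        case False
        then show ?thesis using nd_io_undef[OF dx[OF i]] by (auto simp: vres_comp)
      qed
    qed
  qed
  have c0: "vres j 0 i x = bs ! i" if i: "i < Suc k" for i
  proof (rule ncell_eqI)
    show "nA (vres j 0 i x) = nA (bs ! i)" using aeq[OF i] by (simp add: vres_comp x_def A_def)
    show "nF (vres j 0 i x) = nF (bs ! i)"
      using nd_f_undef[OF db[OF i]] i by (auto simp: vres_comp x_def F_def fun_eq_iff)
    show "nAL (vres j 0 i x) = nAL (bs ! i)"
      using nd_al_undef[OF db[OF i]] i by (auto simp: vres_comp x_def fun_eq_iff)
    show "nIO (vres j 0 i x) = nIO (bs ! i)"
      using nd_io_undef[OF db[OF i]] i by (auto simp: vres_comp x_def IO_def fun_eq_iff)
  qed
  have "segal_map_2 (nerve_map B) j k x = (xs, bs)"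
    unfolding segal_map_2_eq[OF xN]
    using c0 c1 lx lb by (auto intro!: nth_equalityI simp del: upt_Suc)
  then show ?thesis using xN by blast
qed

theorem segal2: "segal_cond_2 (NB B) (nerve_map B) j k"
  unfolding segal_cond_2_def bij_betw_def
proof
  show "inj_on (segal_map_2 (nerve_map B) j k) (NB B j k)"
    by (rule inj_onI) (rule segal2_inj)
  show "segal_map_2 (nerve_map B) j k ` NB B j k =
    wpb (NB B j 1) (NB B j 0) (nerve_map B j 0 id sigma0) (nerve_map B j 0 id tau0) k"
  proof (intro equalityI subsetI)
    fix y assume "y \<in> segal_map_2 (nerve_map B) j k ` NB B j k"
    then show "y \<in> wpb (NB B j 1) (NB B j 0) (nerve_map B j 0 id sigma0) (nerve_map B j 0 id tau0) k"
      using segal2_into by blast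
  next
    fix y assume "y \<in> wpb (NB B j 1) (NB B j 0) (nerve_map B j 0 id sigma0) (nerve_map B j 0 id tau0) k"
    then show "y \<in> segal_map_2 (nerve_map B) j k ` NB B j k"
      using segal2_surj[of "fst y" "snd y"] by (metis image_iff prod.collapse)
  qed
qed


fun cF :: "('o, 'a, 'c, 'm) bicat_scheme \<Rightarrow> (nat \<Rightarrow> 'a) \<Rightarrow> nat \<Rightarrow> nat \<Rightarrow> 'a" where
  "cF B e u 0 = undefined"
| "cF B e u (Suc v) = (if v = u then e u else if u < v then comp1 B (e v) (cF B e u v) else undefined)"

fun cI :: "('o, 'a, 'c, 'm) bicat_scheme \<Rightarrow> (nat \<Rightarrow> 'a) \<Rightarrow> nat \<Rightarrow> nat \<Rightarrow> nat \<Rightarrow> 'c" where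
  "cI B e u v 0 = undefined"
| "cI B e u v (Suc w) = (if w = v then id2 B (comp1 B (e v) (cF B e u v))
     else if v < w then vcomp B (hcomp B (id2 B (e w)) (cI B e u v w)) (bassoc B (e w) (cF B e v w) (cF B e u v))
     else undefined)"

fun cE :: "('o, 'a, 'c, 'm) bicat_scheme \<Rightarrow> (nat \<Rightarrow> 'c) \<Rightarrow> (nat \<Rightarrow> nat \<Rightarrow> nat \<Rightarrow> 'c) \<Rightarrow> (nat \<Rightarrow> nat \<Rightarrow> nat \<Rightarrow> 'c)
   \<Rightarrow> nat \<Rightarrow> nat \<Rightarrow> 'c" where
  "cE B al i0 i1 u 0 = undefined"
| "cE B al i0 i1 u (Suc v) = (if v = u then al u else if u < v then
     vcomp B (i1 u v (Suc v)) (vcomp B (hcomp B (al v) (cE B al i0 i1 u v)) (inv2 B (i0 u v (Suc v))))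
     else undefined)"

context bicategory
begin

abbreviation V (infixr "\<cdot>" 55) where "x \<cdot> y \<equiv> vcomp B x y"
abbreviation H (infixr "\<star>" 65) where "x \<star> y \<equiv> hcomp B x y"
abbreviation C (infixr "\<odot>" 70) where "x \<odot> y \<equiv> comp1 B x y"

lemma tail:
  assumes "A \<cdot> X = P \<cdot> Q" "A \<in> Cell B" "X \<in> Cell B" "P \<in> Cell B" "Q \<in> Cell B"
    "cod2 B X = dom2 B A" "cod2 B Q = dom2 B P" "dom2 B Q = dom2 B X" "Z \<in> Cell B" "cod2 B Z = dom2 B X"
  shows "A \<cdot> (X \<cdot> Z) = P \<cdot> (Q \<cdot> Z)"
proof -
  have "A \<cdot> (X \<cdot> Z) = (A \<cdot> X) \<cdot> Z" using assms(2-10) by simp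
  also have "\<dots> = (P \<cdot> Q) \<cdot> Z" by (simp only: assms(1))
  also have "\<dots> = P \<cdot> (Q \<cdot> Z)" using assms(2-10) by simp
  finally show ?thesis .
qed


lemma vcomp_iso[simp]:
  assumes "iso2 B \<alpha>" "iso2 B \<beta>" "cod2 B \<alpha> = dom2 B \<beta>"
  shows "iso2 B (\<beta> \<cdot> \<alpha>)"
  unfolding iso2_def
proof (intro conjI bexI[of _ "inv2 B \<alpha> \<cdot> inv2 B \<beta>"])
  show "\<beta> \<cdot> \<alpha> \<in> Cell B" "inv2 B \<alpha> \<cdot> inv2 B \<beta> \<in> Cell B"
    "dom2 B (inv2 B \<alpha> \<cdot> inv2 B \<beta>) = cod2 B (\<beta> \<cdot> \<alpha>)"
    "cod2 B (inv2 B \<alpha> \<cdot> inv2 B \<beta>) = dom2 B (\<beta> \<cdot> \<alpha>)"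
    using assms by simp_all
  have "(inv2 B \<alpha> \<cdot> inv2 B \<beta>) \<cdot> (\<beta> \<cdot> \<alpha>) = inv2 B \<alpha> \<cdot> (inv2 B \<beta> \<cdot> (\<beta> \<cdot> \<alpha>))"
    using assms by simp
  also have "\<dots> = id2 B (dom2 B \<alpha>)" using assms by simp
  finally show "(inv2 B \<alpha> \<cdot> inv2 B \<beta>) \<cdot> (\<beta> \<cdot> \<alpha>) = id2 B (dom2 B (\<beta> \<cdot> \<alpha>))" using assms by simp
  have "(\<beta> \<cdot> \<alpha>) \<cdot> (inv2 B \<alpha> \<cdot> inv2 B \<beta>) = \<beta> \<cdot> (\<alpha> \<cdot> (inv2 B \<alpha> \<cdot> inv2 B \<beta>))"
    using assms by simp
  also have "\<dots> = id2 B (cod2 B \<beta>)" using assms by simp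
  finally show "(\<beta> \<cdot> \<alpha>) \<cdot> (inv2 B \<alpha> \<cdot> inv2 B \<beta>) = id2 B (cod2 B (\<beta> \<cdot> \<alpha>))" using assms by simp
qed

lemma wl:
  assumes "a \<in> Cell B" "b \<in> Cell B" "cod2 B b = dom2 B a" "h \<in> Arr B" "trg1 B (dom2 B b) = src1 B h"
  shows "(id2 B h \<star> a) \<cdot> (id2 B h \<star> b) = id2 B h \<star> (a \<cdot> b)"
  using assms by (subst interchange') simp_all

lemma wr:
  assumes "a \<in> Cell B" "b \<in> Cell B" "cod2 B b = dom2 B a" "f \<in> Arr B" "trg1 B f = src1 B (dom2 B b)"
  shows "(a \<star> id2 B f) \<cdot> (b \<star> id2 B f) = (a \<cdot> b) \<star> id2 B f"
  using assms by (subst interchange') simp_all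

lemma wl_t:
  assumes "a \<in> Cell B" "b \<in> Cell B" "cod2 B b = dom2 B a" "h \<in> Arr B" "trg1 B (dom2 B b) = src1 B h"
    "Z \<in> Cell B" "cod2 B Z = h \<odot> dom2 B b"
  shows "(id2 B h \<star> a) \<cdot> ((id2 B h \<star> b) \<cdot> Z) = (id2 B h \<star> (a \<cdot> b)) \<cdot> Z"
proof -
  have "trg1 B (dom2 B a) = src1 B h" using assms by (metis trg_cod)
  then have "(id2 B h \<star> a) \<cdot> ((id2 B h \<star> b) \<cdot> Z) = ((id2 B h \<star> a) \<cdot> (id2 B h \<star> b)) \<cdot> Z"
    using assms by (intro vassoc[symmetric]) simp_all
  then show ?thesis by (simp only: wl[OF assms(1-5)])
qed

lemma wr_t:
  assumes "a \<in> Cell B" "b \<in> Cell B" "cod2 B b = dom2 B a" "f \<in> Arr B" "trg1 B f = src1 B (dom2 B b)"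
    "Z \<in> Cell B" "cod2 B Z = dom2 B b \<odot> f"
  shows "(a \<star> id2 B f) \<cdot> ((b \<star> id2 B f) \<cdot> Z) = ((a \<cdot> b) \<star> id2 B f) \<cdot> Z"
proof -
  have "trg1 B f = src1 B (dom2 B a)" using assms by (metis src_cod)
  then have "(a \<star> id2 B f) \<cdot> ((b \<star> id2 B f) \<cdot> Z) = ((a \<star> id2 B f) \<cdot> (b \<star> id2 B f)) \<cdot> Z"
    using assms by (intro vassoc[symmetric]) simp_all
  then show ?thesis by (simp only: wr[OF assms(1-5)])
qed

lemma an_l:
  assumes "h \<in> Arr B" "g \<in> Arr B" "\<alpha> \<in> Cell B" "trg1 B (dom2 B \<alpha>) = src1 B g" "trg1 B g = src1 B h"
  shows "bassoc B h g (cod2 B \<alpha>) \<cdot> (id2 B (h \<odot> g) \<star> \<alpha>) = (id2 B h \<star> (id2 B g \<star> \<alpha>)) \<cdot> bassoc B h g (dom2 B \<alpha>)"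
  using assoc_natural[of \<alpha> "id2 B g" "id2 B h"] assms by simp

lemma an_m:
  assumes "h \<in> Arr B" "f \<in> Arr B" "\<beta> \<in> Cell B" "trg1 B f = src1 B (dom2 B \<beta>)" "trg1 B (dom2 B \<beta>) = src1 B h"
  shows "bassoc B h (cod2 B \<beta>) f \<cdot> ((id2 B h \<star> \<beta>) \<star> id2 B f) = (id2 B h \<star> (\<beta> \<star> id2 B f)) \<cdot> bassoc B h (dom2 B \<beta>) f"
  using assoc_natural[of "id2 B f" \<beta> "id2 B h"] assms by simp

end

locale chain = bicategory B for B :: "('o, 'a, 'c, 'm) bicat_scheme" +
  fixes e :: "nat \<Rightarrow> 'a" and ob :: "nat \<Rightarrow> 'o" and k :: nat
  assumes e_ty: "\<And>i. i < k \<Longrightarrow> e i \<in> Arr B \<and> src1 B (e i) = ob i \<and> trg1 B (e i) = ob (Suc i)"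
begin

abbreviation F where "F \<equiv> cF B e"
abbreviation I where "I \<equiv> cI B e"

lemma e_arr[simp]: "i < k \<Longrightarrow> e i \<in> Arr B"
  and e_src[simp]: "i < k \<Longrightarrow> src1 B (e i) = ob i"
  and e_trg[simp]: "i < k \<Longrightarrow> trg1 B (e i) = ob (Suc i)"
  using e_ty by auto

lemma F_ty: "u < v \<Longrightarrow> v \<le> k \<Longrightarrow> F u v \<in> Arr B \<and> src1 B (F u v) = ob u \<and> trg1 B (F u v) = ob v"
proof (induction v)
  case (Suc v)
  then show ?case by (cases "v = u") auto
qed simp

lemma F_arr[simp]: "u < v \<Longrightarrow> v \<le> k \<Longrightarrow> F u v \<in> Arr B"
  and F_src[simp]: "u < v \<Longrightarrow> v \<le> k \<Longrightarrow> src1 B (F u v) = ob u"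
  and F_trg[simp]: "u < v \<Longrightarrow> v \<le> k \<Longrightarrow> trg1 B (F u v) = ob v"
  using F_ty by auto

lemma I_ty: "u < v \<Longrightarrow> v < w \<Longrightarrow> w \<le> k \<Longrightarrow>
   iso2 B (I u v w) \<and> dom2 B (I u v w) = F v w \<odot> F u v \<and> cod2 B (I u v w) = F u w"
proof (induction w)
  case (Suc w)
  then show ?case by (cases "w = v") (auto simp: less_Suc_eq)
qed simp

lemma I_iso[simp]: "u < v \<Longrightarrow> v < w \<Longrightarrow> w \<le> k \<Longrightarrow> iso2 B (I u v w)"
  and I_cell[simp]: "u < v \<Longrightarrow> v < w \<Longrightarrow> w \<le> k \<Longrightarrow> I u v w \<in> Cell B"
  and I_dom[simp]: "u < v \<Longrightarrow> v < w \<Longrightarrow> w \<le> k \<Longrightarrow> dom2 B (I u v w) = F v w \<odot> F u v"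
  and I_cod[simp]: "u < v \<Longrightarrow> v < w \<Longrightarrow> w \<le> k \<Longrightarrow> cod2 B (I u v w) = F u w"
  using I_ty by auto


lemma I_A2:
  "u < v \<Longrightarrow> v < w \<Longrightarrow> w < x \<Longrightarrow> x \<le> k \<Longrightarrow>
   I u w x \<cdot> ((id2 B (F w x) \<star> I u v w) \<cdot> bassoc B (F w x) (F v w) (F u v)) =
   I u v x \<cdot> (I v w x \<star> id2 B (F u v))"
proof (induction x arbitrary: w)
  case 0
  then show ?case by simp
next
  case (Suc y)
  show ?case
  proof (cases "w = y")
    case True
    then show ?thesis using Suc.prems by simp
  next
    case False
    then have wy: "w < y" using Suc.prems by simp
    have yk: "y < k" using Suc.prems by simp
    note pr = Suc.prems(1,2) wy yk
    define h where "h = e y"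
    have IH: "I u w y \<cdot> ((id2 B (F w y) \<star> I u v w) \<cdot> bassoc B (F w y) (F v w) (F u v)) =
      I u v y \<cdot> (I v w y \<star> id2 B (F u v))"
      using Suc.IH[OF Suc.prems(1,2) wy] yk by simp
    have "I u w (Suc y) \<cdot> ((id2 B (F w (Suc y)) \<star> I u v w) \<cdot> bassoc B (F w (Suc y)) (F v w) (F u v)) =
      (id2 B h \<star> I u w y) \<cdot> (bassoc B h (F w y) (F u w) \<cdot> ((id2 B (h \<odot> F w y) \<star> I u v w) \<cdot> bassoc B (h \<odot> F w y) (F v w) (F u v)))"
      using pr by (simp add: h_def)
    also have "\<dots> = (id2 B h \<star> I u w y) \<cdot> ((id2 B h \<star> (id2 B (F w y) \<star> I u v w)) \<cdot> (bassoc B h (F w y) (F v w \<odot> F u v) \<cdot> bassoc B (h \<odot> F w y) (F v w) (F u v)))"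
      using pr tail[OF an_l[of h "F w y" "I u v w"], of "bassoc B (h \<odot> F w y) (F v w) (F u v)"]
      by (simp add: h_def)
    also have "\<dots> = (id2 B h \<star> I u w y) \<cdot> ((id2 B h \<star> (id2 B (F w y) \<star> I u v w)) \<cdot> ((id2 B h \<star> bassoc B (F w y) (F v w) (F u v)) \<cdot> (bassoc B h (F w y \<odot> F v w) (F u v) \<cdot> (bassoc B h (F w y) (F v w) \<star> id2 B (F u v)))))"
      using pr pentagon[of "F u v" "F v w" "F w y" h] by (simp add: h_def)
    also have "\<dots> = (id2 B h \<star> (I u w y \<cdot> ((id2 B (F w y) \<star> I u v w) \<cdot> bassoc B (F w y) (F v w) (F u v)))) \<cdot> (bassoc B h (F w y \<odot> F v w) (F u v) \<cdot> (bassoc B h (F w y) (F v w) \<star> id2 B (F u v)))"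
      using pr by (simp add: h_def wl wl_t)
    also have "\<dots> = (id2 B h \<star> (I u v y \<cdot> (I v w y \<star> id2 B (F u v)))) \<cdot> (bassoc B h (F w y \<odot> F v w) (F u v) \<cdot> (bassoc B h (F w y) (F v w) \<star> id2 B (F u v)))"
      by (simp only: IH)
    also have "\<dots> = (id2 B h \<star> I u v y) \<cdot> ((id2 B h \<star> (I v w y \<star> id2 B (F u v))) \<cdot> (bassoc B h (F w y \<odot> F v w) (F u v) \<cdot> (bassoc B h (F w y) (F v w) \<star> id2 B (F u v))))"
      using pr by (simp add: h_def wl wl_t)
    also have "\<dots> = (id2 B h \<star> I u v y) \<cdot> (bassoc B h (F v y) (F u v) \<cdot> (((id2 B h \<star> I v w y) \<star> id2 B (F u v)) \<cdot> (bassoc B h (F w y) (F v w) \<star> id2 B (F u v))))"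
      using pr tail[OF an_m[of h "F u v" "I v w y"], of "bassoc B h (F w y) (F v w) \<star> id2 B (F u v)"]
      by (simp add: h_def)
    also have "\<dots> = I u v (Suc y) \<cdot> (I v w (Suc y) \<star> id2 B (F u v))"
      using pr by (simp add: h_def wr)
    finally show ?thesis .
  qed
qed


end

lemma (in bicategory) ic_t:
  assumes "\<alpha> \<in> Cell B" "\<alpha>' \<in> Cell B" "\<beta> \<in> Cell B" "\<beta>' \<in> Cell B"
          "cod2 B \<alpha> = dom2 B \<alpha>'" "cod2 B \<beta> = dom2 B \<beta>'" "trg1 B (dom2 B \<alpha>) = src1 B (dom2 B \<beta>)"
          "Z \<in> Cell B" "cod2 B Z = dom2 B \<beta> \<odot> dom2 B \<alpha>"
  shows "(\<beta>' \<star> \<alpha>') \<cdot> ((\<beta> \<star> \<alpha>) \<cdot> Z) = ((\<beta>' \<cdot> \<beta>) \<star> (\<alpha>' \<cdot> \<alpha>)) \<cdot> Z"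
proof -
  have "trg1 B (dom2 B \<alpha>') = src1 B (dom2 B \<beta>')" using assms by (metis src_cod trg_cod)
  then have "(\<beta>' \<star> \<alpha>') \<cdot> ((\<beta> \<star> \<alpha>) \<cdot> Z) = ((\<beta>' \<star> \<alpha>') \<cdot> (\<beta> \<star> \<alpha>)) \<cdot> Z"
    using assms by (intro vassoc[symmetric]) simp_all
  then show ?thesis using interchange'[OF assms(1-7)] by simp
qed

locale cells = bicategory B for B :: "('o, 'a, 'c, 'm) bicat_scheme" +
  fixes k :: nat and ob :: "nat \<Rightarrow> 'o" and f0 f1 :: "nat \<Rightarrow> nat \<Rightarrow> 'a"
    and i0 i1 :: "nat \<Rightarrow> nat \<Rightarrow> nat \<Rightarrow> 'c" and al :: "nat \<Rightarrow> 'c"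
  assumes f0_ty: "\<And>u v. u < v \<Longrightarrow> v \<le> k \<Longrightarrow> f0 u v \<in> Arr B \<and> src1 B (f0 u v) = ob u \<and> trg1 B (f0 u v) = ob v"
    and f1_ty: "\<And>u v. u < v \<Longrightarrow> v \<le> k \<Longrightarrow> f1 u v \<in> Arr B \<and> src1 B (f1 u v) = ob u \<and> trg1 B (f1 u v) = ob v"
    and i0_ty: "\<And>u v w. u < v \<Longrightarrow> v < w \<Longrightarrow> w \<le> k \<Longrightarrow>
       iso2 B (i0 u v w) \<and> dom2 B (i0 u v w) = comp1 B (f0 v w) (f0 u v) \<and> cod2 B (i0 u v w) = f0 u w"
    and i1_ty: "\<And>u v w. u < v \<Longrightarrow> v < w \<Longrightarrow> w \<le> k \<Longrightarrow>
       iso2 B (i1 u v w) \<and> dom2 B (i1 u v w) = comp1 B (f1 v w) (f1 u v) \<and> cod2 B (i1 u v w) = f1 u w"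
    and i0_A2: "\<And>u v w x. u < v \<Longrightarrow> v < w \<Longrightarrow> w < x \<Longrightarrow> x \<le> k \<Longrightarrow>
       vcomp B (i0 u w x) (vcomp B (hcomp B (id2 B (f0 w x)) (i0 u v w)) (bassoc B (f0 w x) (f0 v w) (f0 u v))) =
       vcomp B (i0 u v x) (hcomp B (i0 v w x) (id2 B (f0 u v)))"
    and i1_A2: "\<And>u v w x. u < v \<Longrightarrow> v < w \<Longrightarrow> w < x \<Longrightarrow> x \<le> k \<Longrightarrow>
       vcomp B (i1 u w x) (vcomp B (hcomp B (id2 B (f1 w x)) (i1 u v w)) (bassoc B (f1 w x) (f1 v w) (f1 u v))) =
       vcomp B (i1 u v x) (hcomp B (i1 v w x) (id2 B (f1 u v)))"
    and al_ty: "\<And>i. i < k \<Longrightarrow> al i \<in> Cell B \<and> dom2 B (al i) = f0 i (Suc i) \<and> cod2 B (al i) = f1 i (Suc i)"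
begin

abbreviation E where "E \<equiv> cE B al i0 i1"

lemma f0_arr[simp]: "u < v \<Longrightarrow> v \<le> k \<Longrightarrow> f0 u v \<in> Arr B"
  and f0_src[simp]: "u < v \<Longrightarrow> v \<le> k \<Longrightarrow> src1 B (f0 u v) = ob u"
  and f0_trg[simp]: "u < v \<Longrightarrow> v \<le> k \<Longrightarrow> trg1 B (f0 u v) = ob v"
  and f1_arr[simp]: "u < v \<Longrightarrow> v \<le> k \<Longrightarrow> f1 u v \<in> Arr B"
  and f1_src[simp]: "u < v \<Longrightarrow> v \<le> k \<Longrightarrow> src1 B (f1 u v) = ob u"
  and f1_trg[simp]: "u < v \<Longrightarrow> v \<le> k \<Longrightarrow> trg1 B (f1 u v) = ob v"
  using f0_ty f1_ty by auto

lemma i0_iso[simp]: "u < v \<Longrightarrow> v < w \<Longrightarrow> w \<le> k \<Longrightarrow> iso2 B (i0 u v w)"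
  and i0_cell[simp]: "u < v \<Longrightarrow> v < w \<Longrightarrow> w \<le> k \<Longrightarrow> i0 u v w \<in> Cell B"
  and i0_dom[simp]: "u < v \<Longrightarrow> v < w \<Longrightarrow> w \<le> k \<Longrightarrow> dom2 B (i0 u v w) = f0 v w \<odot> f0 u v"
  and i0_cod[simp]: "u < v \<Longrightarrow> v < w \<Longrightarrow> w \<le> k \<Longrightarrow> cod2 B (i0 u v w) = f0 u w"
  and i1_iso[simp]: "u < v \<Longrightarrow> v < w \<Longrightarrow> w \<le> k \<Longrightarrow> iso2 B (i1 u v w)"
  and i1_cell[simp]: "u < v \<Longrightarrow> v < w \<Longrightarrow> w \<le> k \<Longrightarrow> i1 u v w \<in> Cell B"
  and i1_dom[simp]: "u < v \<Longrightarrow> v < w \<Longrightarrow> w \<le> k \<Longrightarrow> dom2 B (i1 u v w) = f1 v w \<odot> f1 u v"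
  and i1_cod[simp]: "u < v \<Longrightarrow> v < w \<Longrightarrow> w \<le> k \<Longrightarrow> cod2 B (i1 u v w) = f1 u w"
  using i0_ty i1_ty by auto

lemma al_cell[simp]: "i < k \<Longrightarrow> al i \<in> Cell B"
  and al_dom[simp]: "i < k \<Longrightarrow> dom2 B (al i) = f0 i (Suc i)"
  and al_cod[simp]: "i < k \<Longrightarrow> cod2 B (al i) = f1 i (Suc i)"
  using al_ty by auto

lemma E_ty: "u < v \<Longrightarrow> v \<le> k \<Longrightarrow> E u v \<in> Cell B \<and> dom2 B (E u v) = f0 u v \<and> cod2 B (E u v) = f1 u v"
proof (induction v)
  case (Suc v)
  then show ?case by (cases "v = u") auto
qed simp

lemma E_cell[simp]: "u < v \<Longrightarrow> v \<le> k \<Longrightarrow> E u v \<in> Cell B"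
  and E_dom[simp]: "u < v \<Longrightarrow> v \<le> k \<Longrightarrow> dom2 B (E u v) = f0 u v"
  and E_cod[simp]: "u < v \<Longrightarrow> v \<le> k \<Longrightarrow> cod2 B (E u v) = f1 u v"
  using E_ty by auto

lemma E_A1:
  "u < v \<Longrightarrow> v < w \<Longrightarrow> w \<le> k \<Longrightarrow> i1 u v w \<cdot> (E v w \<star> E u v) = E u w \<cdot> i0 u v w"
proof (induction w arbitrary: v)
  case 0
  then show ?case by simp
next
  case (Suc m)
  show ?case
  proof (cases "v = m")
    case True
    then show ?thesis using Suc.prems by simp
  next
    case False
    then have vm: "v < m" using Suc.prems by simp
    have mk: "m < k" using Suc.prems by simp
    note pr = Suc.prems(1) vm mk
    have IH: "i1 u v m \<cdot> (E v m \<star> E u v) = E u m \<cdot> i0 u v m"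
      using Suc.IH[OF Suc.prems(1) vm] mk by simp
    have "i1 u v (Suc m) \<cdot> ((E v (Suc m) \<star> E u v) \<cdot> (i0 v m (Suc m) \<star> id2 B (f0 u v))) =
       i1 u v (Suc m) \<cdot> ((i1 v m (Suc m) \<cdot> (al m \<star> E v m)) \<star> E u v)"
      using pr by (simp add: interchange')
    also have "\<dots> = i1 u v (Suc m) \<cdot> ((i1 v m (Suc m) \<star> id2 B (f1 u v)) \<cdot> ((al m \<star> E v m) \<star> E u v))"
      using pr by (simp add: interchange')
    also have "\<dots> = i1 u m (Suc m) \<cdot> ((id2 B (f1 m (Suc m)) \<star> i1 u v m) \<cdot> (bassoc B (f1 m (Suc m)) (f1 v m) (f1 u v) \<cdot> ((al m \<star> E v m) \<star> E u v)))"
    proof -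
      have "(i1 u v (Suc m) \<cdot> (i1 v m (Suc m) \<star> id2 B (f1 u v))) \<cdot> ((al m \<star> E v m) \<star> E u v) =
        (i1 u m (Suc m) \<cdot> ((id2 B (f1 m (Suc m)) \<star> i1 u v m) \<cdot> bassoc B (f1 m (Suc m)) (f1 v m) (f1 u v))) \<cdot> ((al m \<star> E v m) \<star> E u v)"
        using i1_A2[of u v m "Suc m"] pr by simp
      then show ?thesis using pr by simp
    qed
    also have "\<dots> = i1 u m (Suc m) \<cdot> ((id2 B (f1 m (Suc m)) \<star> i1 u v m) \<cdot> ((al m \<star> (E v m \<star> E u v)) \<cdot> bassoc B (f0 m (Suc m)) (f0 v m) (f0 u v)))"
      using pr assoc_natural[of "E u v" "E v m" "al m"] by simp
    also have "\<dots> = i1 u m (Suc m) \<cdot> ((al m \<star> (i1 u v m \<cdot> (E v m \<star> E u v))) \<cdot> bassoc B (f0 m (Suc m)) (f0 v m) (f0 u v))"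
      using pr by (simp add: ic_t)
    also have "\<dots> = i1 u m (Suc m) \<cdot> ((al m \<star> (E u m \<cdot> i0 u v m)) \<cdot> bassoc B (f0 m (Suc m)) (f0 v m) (f0 u v))"
      by (simp only: IH)
    also have "\<dots> = i1 u m (Suc m) \<cdot> ((al m \<star> E u m) \<cdot> ((id2 B (f0 m (Suc m)) \<star> i0 u v m) \<cdot> bassoc B (f0 m (Suc m)) (f0 v m) (f0 u v)))"
      using pr by (simp add: ic_t)
    also have "\<dots> = E u (Suc m) \<cdot> (i0 u m (Suc m) \<cdot> ((id2 B (f0 m (Suc m)) \<star> i0 u v m) \<cdot> bassoc B (f0 m (Suc m)) (f0 v m) (f0 u v)))"
      using pr by simp
    also have "\<dots> = E u (Suc m) \<cdot> (i0 u v (Suc m) \<cdot> (i0 v m (Suc m) \<star> id2 B (f0 u v)))"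
      using i0_A2[of u v m "Suc m"] pr by simp
    finally have X: "(i1 u v (Suc m) \<cdot> (E v (Suc m) \<star> E u v)) \<cdot> (i0 v m (Suc m) \<star> id2 B (f0 u v)) =
       (E u (Suc m) \<cdot> i0 u v (Suc m)) \<cdot> (i0 v m (Suc m) \<star> id2 B (f0 u v))"
      using pr by simp
    show ?thesis
      by (rule iso_cancel_right[OF _ _ _ _ _ X]) (use pr in simp_all)
  qed
qed

end


definition hres :: "nat \<Rightarrow> nat \<Rightarrow> nat \<Rightarrow> ('o, 'a, 'c) ncell \<Rightarrow> ('o, 'a, 'c) ncell" where
  "hres l n c x = NCell (\<lambda>u. if u \<le> l then nA x (c + u) else undefined)
       (\<lambda>z u v. if u < v \<and> v \<le> l \<and> z \<le> n then nF x z (c + u) (c + v) else undefined)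
       (\<lambda>z u v. if u < v \<and> v \<le> l \<and> 1 \<le> z \<and> z \<le> n then nAL x z (c + u) (c + v) else undefined)
       (\<lambda>z u v w. if u < v \<and> v < w \<and> w \<le> l \<and> z \<le> n then nIO x z (c + u) (c + v) (c + w) else undefined)"

lemma hres_comp:
  shows "nA (hres l n c x) u = (if u \<le> l then nA x (c + u) else undefined)"
    "nF (hres l n c x) z u v = (if u < v \<and> v \<le> l \<and> z \<le> n then nF x z (c + u) (c + v) else undefined)"
    "nAL (hres l n c x) z u v = (if u < v \<and> v \<le> l \<and> 1 \<le> z \<and> z \<le> n then nAL x z (c + u) (c + v) else undefined)"
    "nIO (hres l n c x) z u v w = (if u < v \<and> v < w \<and> w \<le> l \<and> z \<le> n then nIO x z (c + u) (c + v) (c + w) else undefined)"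
  unfolding hres_def by simp_all

lemma hres_nm:
  assumes "x \<in> NB B j n" "\<forall>u\<le>l. p u = c + u" "c + l \<le> j"
  shows "nerve_map B l n p id x = hres l n c x"
  using nm_horiz[of B j n "nA x" "nF x" "nAL x" "nIO x" l p c] assms ncell_eta[of x]
  unfolding NB_mem hres_def by simp

lemma hres_NB:
  assumes "x \<in> NB B j n" "c + l \<le> j"
  shows "hres l n c x \<in> NB B l n"
  using nm_horiz_nd[of B j n "nA x" "nF x" "nAL x" "nIO x" c l] assms
  unfolding NB_mem hres_def by simp

lemma pt_nm:
  assumes "x \<in> NB B j n" "p 0 \<le> j"
  shows "nerve_map B 0 0 p q x = pt (nA x (p 0))" "nA x (p 0) \<in> Obj B"
  using nm_point(1)[of B j n "nA x" "nF x" "nAL x" "nIO x" p q] nm_point(2)[of B j n "nA x" "nF x" "nAL x" "nIO x" p]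
    assms
  unfolding NB_mem by (simp_all add: ncell_eta[of x, symmetric])

lemma nA_pt[simp]: "nA (pt a) 0 = a"
  unfolding pt_def by simp

lemma pt_inj: "pt a = pt b \<longleftrightarrow> a = b"
  by (metis nA_pt)

lemma pt_NB: "a \<in> Obj B \<Longrightarrow> pt a \<in> NB B 0 n"
  unfolding NB_0 by (rule imageI)

lemma NB0_pt: "y \<in> NB B 0 n \<Longrightarrow> \<exists>a\<in>Obj B. y = pt a"
  unfolding NB_0 by (rule imageE) auto

lemma segal_map_1_eq:
  assumes "x \<in> NB B k n"
  shows "segal_map_1 (nerve_map B) k n x = (map (\<lambda>i. hres 1 n i x) [0..<k], map (\<lambda>i. pt (nA x i)) [0..<Suc k])"
proof -
  have "map (\<lambda>i. nerve_map B 1 n (iota i) id x) [1..<Suc k] = map (\<lambda>i. hres 1 n (i - 1) x) [1..<Suc k]"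
    using assms by (auto intro!: hres_nm simp: iota_def)
  also have "\<dots> = map (\<lambda>i. hres 1 n i x) [0..<k]"
    by (simp add: map_Suc_upt[symmetric] del: upt_Suc)
  finally have 1: "map (\<lambda>i. nerve_map B 1 n (iota i) id x) [1..<Suc k] = map (\<lambda>i. hres 1 n i x) [0..<k]" .
  have 2: "map (\<lambda>i. nerve_map B 0 0 (\<lambda>_. i) (\<lambda>_. 0) x) [0..<Suc k] = map (\<lambda>i. pt (nA x i)) [0..<Suc k]"
    using assms by (auto intro!: pt_nm)
  show ?thesis unfolding segal_map_1_def 1 2 ..
qed

lemma s0_eq: "y \<in> NB B 1 n \<Longrightarrow> nerve_map B 0 0 sigma0 (\<lambda>_. 0) y = pt (nA y 0)"
  using pt_nm[of y B 1 n sigma0] by (simp add: sigma0_def)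
lemma t0_eq: "y \<in> NB B 1 n \<Longrightarrow> nerve_map B 0 0 tau0 (\<lambda>_. 0) y = pt (nA y 1)"
  using pt_nm[of y B 1 n tau0] by (simp add: tau0_def)


lemma segal1_into:
  assumes x: "x \<in> NB B k n"
  shows "segal_map_1 (nerve_map B) k n x \<in> wpb (NB B 1 n) (NB B 0 0) (nerve_map B 0 0 sigma0 (\<lambda>_. 0)) (nerve_map B 0 0 tau0 (\<lambda>_. 0)) k"
proof -
  have h: "hres 1 n i x \<in> NB B 1 n" if "i < k" for i using that x by (intro hres_NB) auto
  have p: "pt (nA x i) \<in> NB B 0 0" if "i < Suc k" for i
    using that x by (intro pt_NB nd_obj[of B k n "nA x" "nF x" "nAL x" "nIO x"]) (auto simp: NB_mem)
  have st: "nerve_map B 0 0 sigma0 (\<lambda>_. 0) (hres 1 n i x) = pt (nA x i) \<and>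
     nerve_map B 0 0 tau0 (\<lambda>_. 0) (hres 1 n i x) = pt (nA x (Suc i))" if "i < k" for i
    using s0_eq[OF h[OF that]] t0_eq[OF h[OF that]] by (simp add: hres_comp)
  show ?thesis
    unfolding segal_map_1_eq[OF x] wpb_def
    using h p st by (auto simp: nth_map_upt simp del: upt_Suc)
qed


lemma (in bicategory) segal1_surj0:
  assumes w: "(xs, bs) \<in> wpb (NB B 1 0) (NB B 0 0) (nerve_map B 0 0 sigma0 (\<lambda>_. 0)) (nerve_map B 0 0 tau0 (\<lambda>_. 0)) k"
  shows "\<exists>x\<in>NB B k 0. segal_map_1 (nerve_map B) k 0 x = (xs, bs)"
proof -
  have lx: "length xs = k" and lb: "length bs = Suc k" and xsN: "\<And>i. i < k \<Longrightarrow> xs ! i \<in> NB B 1 0"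
    and bsN: "\<And>i. i < Suc k \<Longrightarrow> bs ! i \<in> NB B 0 0"
    and st0: "\<And>i. i < k \<Longrightarrow> nerve_map B 0 0 sigma0 (\<lambda>_. 0) (xs ! i) = bs ! i \<and> nerve_map B 0 0 tau0 (\<lambda>_. 0) (xs ! i) = bs ! Suc i"
    using w unfolding wpb_def by auto
  have st: "pt (nA (xs ! i) 0) = bs ! i \<and> pt (nA (xs ! i) 1) = bs ! Suc i" if "i < k" for i
    using st0[OF that] s0_eq[OF xsN[OF that]] t0_eq[OF xsN[OF that]] by simp
  note dx = xsN[unfolded NB_mem]
  define ob where "ob i = nA (bs ! i) 0" for i
  have bpt: "bs ! i = pt (ob i) \<and> ob i \<in> Obj B" if "i < Suc k" for i
    using NB0_pt[OF bsN[OF that]] unfolding ob_def by auto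
  have xa: "nA (xs ! i) 0 = ob i \<and> nA (xs ! i) 1 = ob (Suc i)" if "i < k" for i
    using st[OF that] bpt[of i] bpt[of "Suc i"] that by (simp add: pt_inj)
  define e where "e i = nF (xs ! i) 0 0 1" for i
  have ety: "e i \<in> Arr B \<and> src1 B (e i) = ob i \<and> trg1 B (e i) = ob (Suc i)" if "i < k" for i
    using nd_f[OF dx[OF that], of 0 1 0] xa[OF that] unfolding e_def by simp
  interpret ch: chain B e ob k by unfold_locales (rule ety)
  define A where "A u = (if u \<le> k then ob u else undefined)" for u
  define Fx where "Fx z u v = (if u < v \<and> v \<le> k \<and> z \<le> (0::nat) then cF B e u v else undefined)" for z u v
  define ALx where "ALx = (\<lambda>z u v. if u < v \<and> v \<le> k \<and> 1 \<le> z \<and> z \<le> (0::nat) then (undefined :: 'c) else undefined)"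
  define Ix where "Ix z u v w = (if u < v \<and> v < w \<and> w \<le> k \<and> z \<le> (0::nat) then cI B e u v w else undefined)" for z u v w
  have nd: "nerve_data B k 0 A Fx ALx Ix"
  proof (rule nerve_data_intro)
    show "A u \<in> Obj B" if "u \<le> k" for u using bpt[of u] that by (simp add: A_def)
    show "A u = undefined" if "\<not> u \<le> k" for u using that by (simp add: A_def)
    show "Fx z u v \<in> Arr B \<and> src1 B (Fx z u v) = A u \<and> trg1 B (Fx z u v) = A v"
      if "u < v" "v \<le> k" "z \<le> 0" for z u v using that by (simp add: Fx_def A_def)
    show "Fx z u v = undefined" if "\<not> (u < v \<and> v \<le> k \<and> z \<le> 0)" for z u v
      using that by (auto simp: Fx_def)
    show "ALx z u v \<in> Cell B \<and> dom2 B (ALx z u v) = Fx (z - 1) u v \<and> cod2 B (ALx z u v) = Fx z u v"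
      if "u < v" "v \<le> k" "1 \<le> z" "z \<le> 0" for z u v using that by simp
    show "ALx z u v = undefined" for z u v by (simp add: ALx_def)
    show "iso2 B (Ix z u v w) \<and> dom2 B (Ix z u v w) = comp1 B (Fx z v w) (Fx z u v) \<and> cod2 B (Ix z u v w) = Fx z u w"
      if "u < v" "v < w" "w \<le> k" "z \<le> 0" for z u v w using that by (simp add: Fx_def Ix_def)
    show "Ix z u v w = undefined" if "\<not> (u < v \<and> v < w \<and> w \<le> k \<and> z \<le> 0)" for z u v w
      using that by (auto simp: Ix_def)
    show "vcomp B (Ix z u v w) (hcomp B (ALx z v w) (ALx z u v)) = vcomp B (ALx z u w) (Ix (z - 1) u v w)"
      if "u < v" "v < w" "w \<le> k" "1 \<le> z" "z \<le> 0" for z u v w using that by simp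
    show "vcomp B (Ix z u w x) (vcomp B (hcomp B (id2 B (Fx z w x)) (Ix z u v w))
                                 (bassoc B (Fx z w x) (Fx z v w) (Fx z u v))) =
       vcomp B (Ix z u v x) (hcomp B (Ix z v w x) (id2 B (Fx z u v)))"
      if "u < v" "v < w" "w < x" "x \<le> k" "z \<le> 0" for z u v w x
      using that ch.I_A2[of u v w x] by (simp add: Fx_def Ix_def)
  qed
  define x where "x = NCell A Fx ALx Ix"
  have xN: "x \<in> NB B k 0" unfolding x_def NB_NCell by (rule nd)
  have c1: "hres 1 0 i x = xs ! i" if i: "i < k" for i
  proof (rule ncell_eqI)
    show "nA (hres 1 0 i x) = nA (xs ! i)"
    proof
      fix u show "nA (hres 1 0 i x) u = nA (xs ! i) u"
        using xa[OF i] nd_undef_a[OF dx[OF i], of u] i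
        by (cases "u = 0"; cases "u = 1") (auto simp: hres_comp x_def A_def)
    qed
    show "nF (hres 1 0 i x) = nF (xs ! i)"
    proof (intro ext)
      fix z u v
      show "nF (hres 1 0 i x) z u v = nF (xs ! i) z u v"
      proof (cases "u < v \<and> v \<le> 1 \<and> z \<le> 0")
        case True
        then have "u = 0" "v = 1" "z = 0" by auto
        then show ?thesis using i by (simp add: hres_comp x_def Fx_def e_def)
      next
        case False
        then show ?thesis using nd_f_undef[OF dx[OF i]] by (auto simp: hres_comp)
      qed
    qed
    show "nAL (hres 1 0 i x) = nAL (xs ! i)"
      using nd_al_undef[OF dx[OF i]] by (auto simp: hres_comp fun_eq_iff)
    show "nIO (hres 1 0 i x) = nIO (xs ! i)"
      using nd_io_undef[OF dx[OF i]] by (auto simp: hres_comp fun_eq_iff)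
  qed
  have c0: "pt (nA x i) = bs ! i" if i: "i < Suc k" for i
    using bpt[OF i] i by (simp add: x_def A_def)
  have "segal_map_1 (nerve_map B) k 0 x = (xs, bs)"
    unfolding segal_map_1_eq[OF xN]
    using c0 c1 lx lb by (auto intro!: nth_equalityI simp del: upt_Suc)
  then show ?thesis using xN by blast
qed


lemma vres_hres:
  assumes x: "x \<in> NB B k 1" and i: "i < k" and c: "c \<le> 1"
  shows "vres 1 0 c (hres 1 1 i x) = hres 1 0 i (vres k 0 c x)"
proof (rule ncell_eqI)
  note d = x[unfolded NB_mem]
  show "nA (vres 1 0 c (hres 1 1 i x)) = nA (hres 1 0 i (vres k 0 c x))"
    by (simp add: fun_eq_iff hres_comp vres_comp)
  show "nF (vres 1 0 c (hres 1 1 i x)) = nF (hres 1 0 i (vres k 0 c x))"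
    using i c by (auto simp: fun_eq_iff hres_comp vres_comp)
  show "nAL (vres 1 0 c (hres 1 1 i x)) = nAL (hres 1 0 i (vres k 0 c x))"
    by (auto simp: fun_eq_iff hres_comp vres_comp)
  show "nIO (vres 1 0 c (hres 1 1 i x)) = nIO (hres 1 0 i (vres k 0 c x))"
    by (auto simp: fun_eq_iff hres_comp vres_comp)
qed

definition T1 where
  "T1 B k = {(a, b, a'). a \<in> NB B k 0 \<and>
      b \<in> wpb (NB B 1 1) (NB B 0 0) (nerve_map B 0 0 sigma0 (\<lambda>_. 0)) (nerve_map B 0 0 tau0 (\<lambda>_. 0)) k \<and>
      a' \<in> NB B k 0 \<and>
      (\<lambda>(xs, bs). (map (nerve_map B 1 0 id sigma0) xs, bs)) b = segal_map_1 (nerve_map B) k 0 a \<and>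
      (\<lambda>(xs, bs). (map (nerve_map B 1 0 id tau0) xs, bs)) b = segal_map_1 (nerve_map B) k 0 a'}"

lemma segal1_into1:
  assumes x: "x \<in> NB B k 1"
  shows "(nerve_map B k 0 id sigma0 x, segal_map_1 (nerve_map B) k 1 x, nerve_map B k 0 id tau0 x) \<in> T1 B k"
proof -
  have v0: "nerve_map B k 0 id sigma0 x = vres k 0 0 x" and v1: "nerve_map B k 0 id tau0 x = vres k 0 1 x"
    using vres_sigma[OF x] vres_tau[OF x] by simp_all
  have N0: "vres k 0 0 x \<in> NB B k 0" "vres k 0 1 x \<in> NB B k 0" using x by (auto intro: vres_NB)
  have h: "hres 1 1 i x \<in> NB B 1 1" if "i < k" for i using that x by (intro hres_NB) auto
  have m0: "map (nerve_map B 1 0 id sigma0) (map (\<lambda>i. hres 1 1 i x) [0..<k]) = map (\<lambda>i. hres 1 0 i (vres k 0 0 x)) [0..<k]"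
    using h vres_sigma[OF h] vres_hres[OF x] by (simp del: upt_Suc)
  have m1: "map (nerve_map B 1 0 id tau0) (map (\<lambda>i. hres 1 1 i x) [0..<k]) = map (\<lambda>i. hres 1 0 i (vres k 0 1 x)) [0..<k]"
    using h vres_tau[OF h] vres_hres[OF x] by (simp del: upt_Suc)
  show ?thesis
    using N0 segal1_into[OF x]
    unfolding T1_def v0 v1 segal_map_1_eq[OF x]
    using m0 m1 by (simp add: vres_comp segal_map_1_eq[OF N0(1)] segal_map_1_eq[OF N0(2), simplified])
qed


lemma (in bicategory) segal1_inj1:
  assumes x: "x \<in> NB B k 1" and y: "y \<in> NB B k 1"
    and e0: "vres k 0 0 x = vres k 0 0 y" and e1: "vres k 0 1 x = vres k 0 1 y"
    and es: "segal_map_1 (nerve_map B) k 1 x = segal_map_1 (nerve_map B) k 1 y"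
  shows "x = y"
proof -
  note dx = x[unfolded NB_mem] and dy = y[unfolded NB_mem]
  from es have "map (\<lambda>i. hres 1 1 i x) [0..<k] = map (\<lambda>i. hres 1 1 i y) [0..<k]"
    unfolding segal_map_1_eq[OF x] segal_map_1_eq[OF y] by simp
  then have eh: "hres 1 1 i x = hres 1 1 i y" if "i < k" for i
    using that unfolding map_eq_conv by (simp del: upt_Suc)
  have aeq: "nA x = nA y" using arg_cong[OF e0, of nA] by (simp add: vres_comp)
  have feq: "nF x z u v = nF y z u v" if z1: "z \<le> 1" for z u v
  proof (cases "u < v \<and> v \<le> k")
    case True
    then consider "z = 0" | "z = 1" using z1 by linarith
    then show ?thesis
    proof cases
      case 1 then show ?thesis using True vres_at(1)[of u v k 0 0 0 x] vres_at(1)[of u v k 0 0 0 y] e0 by simp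
    next
      case 2 then show ?thesis using True vres_at(1)[of u v k 0 0 1 x] vres_at(1)[of u v k 0 0 1 y] e1 by simp
    qed
  next
    case False
    then show ?thesis using nd_f_undef[OF dx] nd_f_undef[OF dy] by metis
  qed
  have ieq: "nIO x z u v w = nIO y z u v w" if z1: "z \<le> 1" for z u v w
  proof (cases "u < v \<and> v < w \<and> w \<le> k")
    case True
    then consider "z = 0" | "z = 1" using z1 by linarith
    then show ?thesis
    proof cases
      case 1 then show ?thesis using True vres_at(3)[of u v w k 0 0 0 x] vres_at(3)[of u v w k 0 0 0 y] e0 by simp
    next
      case 2 then show ?thesis using True vres_at(3)[of u v w k 0 0 1 x] vres_at(3)[of u v w k 0 0 1 y] e1 by simp
    qed
  next
    case False
    then show ?thesis using nd_io_undef[OF dx] nd_io_undef[OF dy] by metis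
  qed
  have base: "nAL x 1 i (Suc i) = nAL y 1 i (Suc i)" if "i < k" for i
    using fun_cong[OF fun_cong[OF fun_cong[OF arg_cong[OF eh[OF that], of nAL]]], of 1 0 1] that
    by (simp add: hres_comp)
  have aleq: "nAL x 1 u v = nAL y 1 u v" if "u < v" "v \<le> k" for u v
    using that
  proof (induction v)
    case 0 then show ?case by simp
  next
    case (Suc m)
    show ?case
    proof (cases "u = m")
      case True then show ?thesis using base Suc.prems by simp
    next
      case False
      then have um: "u < m" using Suc.prems by simp
      have IH: "nAL x 1 u m = nAL y 1 u m" using Suc.IH um Suc.prems by simp
      have b: "nAL x 1 m (Suc m) = nAL y 1 m (Suc m)" using base Suc.prems by simp
      have A1x: "vcomp B (nIO x 1 u m (Suc m)) (hcomp B (nAL x 1 m (Suc m)) (nAL x 1 u m)) =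
          vcomp B (nAL x 1 u (Suc m)) (nIO x 0 u m (Suc m))"
        using nd_A1[OF dx um, of "Suc m" 1] Suc.prems by simp
      have A1y: "vcomp B (nIO y 1 u m (Suc m)) (hcomp B (nAL y 1 m (Suc m)) (nAL y 1 u m)) =
          vcomp B (nAL y 1 u (Suc m)) (nIO y 0 u m (Suc m))"
        using nd_A1[OF dy um, of "Suc m" 1] Suc.prems by simp
      have X: "vcomp B (nAL x 1 u (Suc m)) (nIO x 0 u m (Suc m)) = vcomp B (nAL y 1 u (Suc m)) (nIO x 0 u m (Suc m))"
        using A1x A1y IH b ieq[of 1 u m "Suc m"] ieq[of 0 u m "Suc m"] by simp
      show ?thesis
        apply (rule iso_cancel_right[OF _ _ _ _ _ X])
        using nd_io[OF dx um, of "Suc m" 0] nd_al[OF dx, of u "Suc m" 1] nd_al[OF dy, of u "Suc m" 1]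
          feq[of 0 u "Suc m"] Suc.prems by simp_all
    qed
  qed
  show ?thesis
  proof (rule ncell_eqI)
    show "nA x = nA y" by (rule aeq)
    show "nF x = nF y"
    proof (intro ext)
      fix z u v show "nF x z u v = nF y z u v"
        using feq[of z u v] nd_f_undef[OF dx, of u v z] nd_f_undef[OF dy, of u v z] by (cases "z \<le> 1") auto
    qed
    show "nIO x = nIO y"
    proof (intro ext)
      fix z u v w show "nIO x z u v w = nIO y z u v w"
        using ieq[of z u v w] nd_io_undef[OF dx, of u v w z] nd_io_undef[OF dy, of u v w z] by (cases "z \<le> 1") auto
    qed
    show "nAL x = nAL y"
    proof (intro ext)
      fix z u v show "nAL x z u v = nAL y z u v"
      proof (cases "u < v \<and> v \<le> k \<and> z = 1")
        case True then show ?thesis using aleq by auto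
      next
        case False then show ?thesis using nd_al_undef[OF dx, of u v z] nd_al_undef[OF dy, of u v z] by auto
      qed
    qed
  qed
qed


lemma (in bicategory) segal1_surj1:
  assumes T: "(a, b, a') \<in> T1 B k"
  shows "\<exists>x\<in>NB B k 1. (nerve_map B k 0 id sigma0 x, segal_map_1 (nerve_map B) k 1 x, nerve_map B k 0 id tau0 x) = (a, b, a')"
proof -
  obtain xs bs where b: "b = (xs, bs)" by (cases b)
  have aN: "a \<in> NB B k 0" and a'N: "a' \<in> NB B k 0"
    and bw: "(xs, bs) \<in> wpb (NB B 1 1) (NB B 0 0) (nerve_map B 0 0 sigma0 (\<lambda>_. 0)) (nerve_map B 0 0 tau0 (\<lambda>_. 0)) k"
    and sB: "map (nerve_map B 1 0 id sigma0) xs = map (\<lambda>i. hres 1 0 i a) [0..<k]" "bs = map (\<lambda>i. pt (nA a i)) [0..<Suc k]"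
    and tB: "map (nerve_map B 1 0 id tau0) xs = map (\<lambda>i. hres 1 0 i a') [0..<k]" "bs = map (\<lambda>i. pt (nA a' i)) [0..<Suc k]"
    using T unfolding T1_def b by (auto simp: segal_map_1_eq simp del: upt_Suc)
  have lx: "length xs = k" and lb: "length bs = Suc k" and xsN: "\<And>i. i < k \<Longrightarrow> xs ! i \<in> NB B 1 1"
    using bw unfolding wpb_def by auto
  note da = aN[unfolded NB_mem] and da' = a'N[unfolded NB_mem] and dx = xsN[unfolded NB_mem]
  have hs: "vres 1 0 0 (xs ! i) = hres 1 0 i a" if "i < k" for i
    using arg_cong[OF sB(1), of "\<lambda>l. l ! i"] vres_sigma[OF xsN[OF that]] that lx by (simp del: upt_Suc)
  have ht: "vres 1 0 1 (xs ! i) = hres 1 0 i a'" if "i < k" for i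
    using arg_cong[OF tB(1), of "\<lambda>l. l ! i"] vres_tau[OF xsN[OF that]] that lx by (simp del: upt_Suc)
  have aa: "nA a' = nA a"
  proof
    fix u show "nA a' u = nA a u"
    proof (cases "u \<le> k")
      case True
      then show ?thesis
        using arg_cong[OF sB(2), of "\<lambda>l. l ! u"] arg_cong[OF tB(2), of "\<lambda>l. l ! u"] by (simp add: pt_inj del: upt_Suc)
    next
      case False then show ?thesis using nd_undef_a[OF da] nd_undef_a[OF da'] by metis
    qed
  qed
  have F0: "nF (xs ! i) 0 0 1 = nF a 0 i (Suc i)" if "i < k" for i
    using arg_cong[OF hs[OF that], of nF] vres_at(1)[of 0 1 1 0 0 0 "xs ! i"] that
    by (simp add: hres_comp)
  have F1: "nF (xs ! i) 1 0 1 = nF a' 0 i (Suc i)" if "i < k" for i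
    using arg_cong[OF ht[OF that], of nF] vres_at(1)[of 0 1 1 0 0 1 "xs ! i"] that
    by (simp add: hres_comp)
  define \<alpha> where "\<alpha> i = nAL (xs ! i) 1 0 1" for i
  have \<alpha>ty: "\<alpha> i \<in> Cell B \<and> dom2 B (\<alpha> i) = nF a 0 i (Suc i) \<and> cod2 B (\<alpha> i) = nF a' 0 i (Suc i)" if "i < k" for i
    using nd_al[OF dx[OF that], of 0 1 1] F0[OF that] F1[OF that] unfolding \<alpha>_def by simp
  interpret cl: cells B k "nA a" "nF a 0" "nF a' 0" "nIO a 0" "nIO a' 0" \<alpha>
  proof
    show "\<And>u v. u < v \<Longrightarrow> v \<le> k \<Longrightarrow> nF a 0 u v \<in> Arr B \<and> src1 B (nF a 0 u v) = nA a u \<and> trg1 B (nF a 0 u v) = nA a v"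
      using nd_f[OF da] by simp
    show "\<And>u v. u < v \<Longrightarrow> v \<le> k \<Longrightarrow> nF a' 0 u v \<in> Arr B \<and> src1 B (nF a' 0 u v) = nA a u \<and> trg1 B (nF a' 0 u v) = nA a v"
      using nd_f[OF da'] aa by simp
    show "\<And>u v w. u < v \<Longrightarrow> v < w \<Longrightarrow> w \<le> k \<Longrightarrow> iso2 B (nIO a 0 u v w) \<and>
      dom2 B (nIO a 0 u v w) = comp1 B (nF a 0 v w) (nF a 0 u v) \<and> cod2 B (nIO a 0 u v w) = nF a 0 u w"
      using nd_io[OF da] by simp
    show "\<And>u v w. u < v \<Longrightarrow> v < w \<Longrightarrow> w \<le> k \<Longrightarrow> iso2 B (nIO a' 0 u v w) \<and>
      dom2 B (nIO a' 0 u v w) = comp1 B (nF a' 0 v w) (nF a' 0 u v) \<and> cod2 B (nIO a' 0 u v w) = nF a' 0 u w"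
      using nd_io[OF da'] by simp
    show "\<And>u v w x. u < v \<Longrightarrow> v < w \<Longrightarrow> w < x \<Longrightarrow> x \<le> k \<Longrightarrow>
       vcomp B (nIO a 0 u w x) (vcomp B (hcomp B (id2 B (nF a 0 w x)) (nIO a 0 u v w)) (bassoc B (nF a 0 w x) (nF a 0 v w) (nF a 0 u v))) =
       vcomp B (nIO a 0 u v x) (hcomp B (nIO a 0 v w x) (id2 B (nF a 0 u v)))"
      using nd_A2[OF da] by simp
    show "\<And>u v w x. u < v \<Longrightarrow> v < w \<Longrightarrow> w < x \<Longrightarrow> x \<le> k \<Longrightarrow>
       vcomp B (nIO a' 0 u w x) (vcomp B (hcomp B (id2 B (nF a' 0 w x)) (nIO a' 0 u v w)) (bassoc B (nF a' 0 w x) (nF a' 0 v w) (nF a' 0 u v))) =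
       vcomp B (nIO a' 0 u v x) (hcomp B (nIO a' 0 v w x) (id2 B (nF a' 0 u v)))"
      using nd_A2[OF da'] by simp
    show "\<And>i. i < k \<Longrightarrow> \<alpha> i \<in> Cell B \<and> dom2 B (\<alpha> i) = nF a 0 i (Suc i) \<and> cod2 B (\<alpha> i) = nF a' 0 i (Suc i)"
      by (rule \<alpha>ty)
  qed
  define FF where "FF z u v = (if u < v \<and> v \<le> k \<and> z \<le> (1::nat) then (if z = 0 then nF a 0 u v else nF a' 0 u v) else undefined)" for z u v
  define AL where "AL z u v = (if u < v \<and> v \<le> k \<and> 1 \<le> z \<and> z \<le> (1::nat) then cE B \<alpha> (nIO a 0) (nIO a' 0) u v else undefined)" for z u v
  define II where "II z u v w = (if u < v \<and> v < w \<and> w \<le> k \<and> z \<le> (1::nat) then (if z = 0 then nIO a 0 u v w else nIO a' 0 u v w) else undefined)" for z u v w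
  have nd: "nerve_data B k 1 (nA a) FF AL II"
  proof (rule nerve_data_intro)
    show "nA a u \<in> Obj B" if "u \<le> k" for u using nd_obj[OF da that] .
    show "nA a u = undefined" if "\<not> u \<le> k" for u using nd_undef_a[OF da that] .
    show "FF z u v \<in> Arr B \<and> src1 B (FF z u v) = nA a u \<and> trg1 B (FF z u v) = nA a v"
      if "u < v" "v \<le> k" "z \<le> 1" for z u v using that by (simp add: FF_def)
    show "FF z u v = undefined" if "\<not> (u < v \<and> v \<le> k \<and> z \<le> 1)" for z u v
      using that by (auto simp: FF_def)
    show "AL z u v \<in> Cell B \<and> dom2 B (AL z u v) = FF (z - 1) u v \<and> cod2 B (AL z u v) = FF z u v"
      if "u < v" "v \<le> k" "1 \<le> z" "z \<le> 1" for z u v using that by (simp add: FF_def AL_def)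
    show "AL z u v = undefined" if "\<not> (u < v \<and> v \<le> k \<and> 1 \<le> z \<and> z \<le> 1)" for z u v
      using that by (auto simp: AL_def)
    show "iso2 B (II z u v w) \<and> dom2 B (II z u v w) = comp1 B (FF z v w) (FF z u v) \<and> cod2 B (II z u v w) = FF z u w"
      if "u < v" "v < w" "w \<le> k" "z \<le> 1" for z u v w using that by (simp add: FF_def II_def)
    show "II z u v w = undefined" if "\<not> (u < v \<and> v < w \<and> w \<le> k \<and> z \<le> 1)" for z u v w
      using that by (auto simp: II_def)
    show "vcomp B (II z u v w) (hcomp B (AL z v w) (AL z u v)) = vcomp B (AL z u w) (II (z - 1) u v w)"
      if "u < v" "v < w" "w \<le> k" "1 \<le> z" "z \<le> 1" for z u v w
      using that cl.E_A1[of u v w] by (simp add: AL_def II_def)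
    show "vcomp B (II z u w x) (vcomp B (hcomp B (id2 B (FF z w x)) (II z u v w))
                                 (bassoc B (FF z w x) (FF z v w) (FF z u v))) =
       vcomp B (II z u v x) (hcomp B (II z v w x) (id2 B (FF z u v)))"
      if "u < v" "v < w" "w < x" "x \<le> k" "z \<le> 1" for z u v w x
      using that nd_A2[OF da that(1-4), of 0] nd_A2[OF da' that(1-4), of 0] by (simp add: FF_def II_def)
  qed
  define x where "x = NCell (nA a) FF AL II"
  have xN: "x \<in> NB B k 1" unfolding x_def NB_NCell by (rule nd)
  have v0: "vres k 0 0 x = a"
  proof (rule ncell_eqI)
    show "nA (vres k 0 0 x) = nA a" by (simp add: vres_comp x_def)
    show "nF (vres k 0 0 x) = nF a"
      using nd_f_undef[OF da] by (auto simp: vres_comp x_def FF_def fun_eq_iff)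
    show "nAL (vres k 0 0 x) = nAL a"
      using nd_al_undef[OF da] by (auto simp: vres_comp x_def fun_eq_iff)
    show "nIO (vres k 0 0 x) = nIO a"
      using nd_io_undef[OF da] by (auto simp: vres_comp x_def II_def fun_eq_iff)
  qed
  have v1: "vres k 0 1 x = a'"
  proof (rule ncell_eqI)
    show "nA (vres k 0 1 x) = nA a'" by (simp add: vres_comp x_def aa)
    show "nF (vres k 0 1 x) = nF a'"
      using nd_f_undef[OF da'] by (auto simp: vres_comp x_def FF_def fun_eq_iff)
    show "nAL (vres k 0 1 x) = nAL a'"
      using nd_al_undef[OF da'] by (auto simp: vres_comp x_def fun_eq_iff)
    show "nIO (vres k 0 1 x) = nIO a'"
      using nd_io_undef[OF da'] by (auto simp: vres_comp x_def II_def fun_eq_iff)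
  qed
  have c1: "hres 1 1 i x = xs ! i" if i: "i < k" for i
  proof (rule ncell_eqI)
    have "nA (xs ! i) = nA (hres 1 0 i a)" using arg_cong[OF hs[OF i], of nA] by (simp add: vres_comp)
    then show "nA (hres 1 1 i x) = nA (xs ! i)" by (simp add: hres_comp x_def fun_eq_iff)
    show "nF (hres 1 1 i x) = nF (xs ! i)"
    proof (intro ext)
      fix z u v
      show "nF (hres 1 1 i x) z u v = nF (xs ! i) z u v"
      proof (cases "u < v \<and> v \<le> 1 \<and> z \<le> 1")
        case True
        then have uv: "u = 0" "v = 1" by auto
        from True consider "z = 0" | "z = 1" by linarith
        then show ?thesis using i F0[OF i] F1[OF i] uv by cases (simp_all add: hres_comp x_def FF_def)
      next
        case False
        then show ?thesis using nd_f_undef[OF dx[OF i]] by (auto simp: hres_comp)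
      qed
    qed
    show "nAL (hres 1 1 i x) = nAL (xs ! i)"
    proof (intro ext)
      fix z u v
      show "nAL (hres 1 1 i x) z u v = nAL (xs ! i) z u v"
      proof (cases "u < v \<and> v \<le> 1 \<and> 1 \<le> z \<and> z \<le> 1")
        case True
        then have "u = 0" "v = 1" "z = 1" by auto
        then show ?thesis using i by (simp add: hres_comp x_def AL_def \<alpha>_def)
      next
        case False
        then show ?thesis using nd_al_undef[OF dx[OF i]] by (auto simp: hres_comp)
      qed
    qed
    show "nIO (hres 1 1 i x) = nIO (xs ! i)"
      using nd_io_undef[OF dx[OF i]] by (auto simp: hres_comp fun_eq_iff)
  qed
  have "segal_map_1 (nerve_map B) k 1 x = (xs, bs)"
    unfolding segal_map_1_eq[OF xN] sB(2)
    using c1 lx by (auto intro!: nth_equalityI simp: x_def simp del: upt_Suc)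
  moreover have "nerve_map B k 0 id sigma0 x = a" "nerve_map B k 0 id tau0 x = a'"
    using vres_sigma[OF xN] vres_tau[OF xN] v0 v1 by simp_all
  ultimately show ?thesis using xN b by blast
qed


lemma (in bicategory) segal1: "segal_cond_1 (NB B) (nerve_map B) k"
  unfolding segal_cond_1_def contractible_def
proof (intro conjI)
  show "segal_map_1 (nerve_map B) k 0 ` NB B k 0 =
    wpb (NB B 1 0) (NB B 0 0) (nerve_map B 0 0 sigma0 (\<lambda>_. 0)) (nerve_map B 0 0 tau0 (\<lambda>_. 0)) k"
  proof (intro equalityI subsetI)
    fix y assume "y \<in> segal_map_1 (nerve_map B) k 0 ` NB B k 0"
    then show "y \<in> wpb (NB B 1 0) (NB B 0 0) (nerve_map B 0 0 sigma0 (\<lambda>_. 0)) (nerve_map B 0 0 tau0 (\<lambda>_. 0)) k"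
      using segal1_into by blast
  next
    fix y assume "y \<in> wpb (NB B 1 0) (NB B 0 0) (nerve_map B 0 0 sigma0 (\<lambda>_. 0)) (nerve_map B 0 0 tau0 (\<lambda>_. 0)) k"
    then show "y \<in> segal_map_1 (nerve_map B) k 0 ` NB B k 0"
      using segal1_surj0[of "fst y" "snd y" k] by (metis image_iff prod.collapse)
  qed
  have inj: "inj_on (\<lambda>x. (nerve_map B k 0 id sigma0 x, segal_map_1 (nerve_map B) k 1 x, nerve_map B k 0 id tau0 x)) (NB B k 1)"
  proof (rule inj_onI)
    fix x y assume x: "x \<in> NB B k 1" and y: "y \<in> NB B k 1"
      and eq: "(nerve_map B k 0 id sigma0 x, segal_map_1 (nerve_map B) k 1 x, nerve_map B k 0 id tau0 x) =
        (nerve_map B k 0 id sigma0 y, segal_map_1 (nerve_map B) k 1 y, nerve_map B k 0 id tau0 y)"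
    show "x = y"
      by (rule segal1_inj1[OF x y]) (use eq vres_sigma[OF x] vres_sigma[OF y] vres_tau[OF x] vres_tau[OF y] in simp_all)
  qed
  have img: "(\<lambda>x. (nerve_map B k 0 id sigma0 x, segal_map_1 (nerve_map B) k 1 x, nerve_map B k 0 id tau0 x)) ` NB B k 1 = T1 B k"
  proof (intro equalityI subsetI)
    fix t assume "t \<in> (\<lambda>x. (nerve_map B k 0 id sigma0 x, segal_map_1 (nerve_map B) k 1 x, nerve_map B k 0 id tau0 x)) ` NB B k 1"
    then show "t \<in> T1 B k" using segal1_into1 by blast
  next
    fix t assume t: "t \<in> T1 B k"
    obtain a b a' where "t = (a, b, a')" by (cases t) auto
    then show "t \<in> (\<lambda>x. (nerve_map B k 0 id sigma0 x, segal_map_1 (nerve_map B) k 1 x, nerve_map B k 0 id tau0 x)) ` NB B k 1"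
      using segal1_surj1[of a b a' k] t by (metis (no_types, lifting) image_iff)
  qed
  show "bij_betw (\<lambda>x. (nerve_map B k 0 id sigma0 x, segal_map_1 (nerve_map B) k 1 x, nerve_map B k 0 id tau0 x)) (NB B k 1)
     {(a, b, a'). a \<in> NB B k 0 \<and>
      b \<in> wpb (NB B 1 1) (NB B 0 0) (nerve_map B 0 0 sigma0 (\<lambda>_. 0)) (nerve_map B 0 0 tau0 (\<lambda>_. 0)) k \<and>
      a' \<in> NB B k 0 \<and>
      (\<lambda>(xs, bs). (map (nerve_map B 1 0 id sigma0) xs, bs)) b = segal_map_1 (nerve_map B) k 0 a \<and>
      (\<lambda>(xs, bs). (map (nerve_map B 1 0 id tau0) xs, bs)) b = segal_map_1 (nerve_map B) k 0 a'}"
    using inj img unfolding bij_betw_def T1_def by simp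
qed

theorem mainTheorem17:
  fixes B :: "('o, 'a, 'c, 'm) bicat_scheme"
  assumes "bicategory B"
  shows "(\<forall>k. segal_cond_1 (NB B) (nerve_map B) k) \<and>
         (\<forall>j k. segal_cond_2 (NB B) (nerve_map B) j k)"
  using bicategory.segal1[OF assms] segal2 by blast


end
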